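(* Let $n\in\mathbb N$, let $A$ be a Young function satisfying (C1), (C2), (C3), let $B$ be the associated function, let $\varphi$ be a gauge function with $\lim_{r\to0^+}\varphi(r)/r^n=\infty$, and let $\psi$ be the associated gauge function. For $r>0$ let $J_r(0)=0$, $J_r(s)=s\,B^{-1}(r\varphi(s)/s^n)$ for $s>0$. Then for every $r>0$, $$\liminf_{t\to0^+}\frac{\varphi(J_r^{-1}(t))}{\psi(t)}\ge\frac{1}{\Theta^0_\psi\big(\Theta^\infty_{B^{-1}}(r)^+\big)}\quad\text{and}\quad \inf_{t>0}\frac{\varphi(J_r^{-1}(t))}{\psi(t)}\ge\frac{1}{\Theta_\psi\big(\Theta_{B^{-1}}(r)^+\big)},$$ where $\Theta(a^+)$ denotes $\lim_{\rho\to a^+}\Theta(\rho)$.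
   Context: A gauge function is a function $\varphi\colon[0,\infty)\to[0,\infty)$ that is increasing, continuous and vanishes only at $0$, and (standing assumption) such that $r\mapsto\varphi(r)/r^n$ is non-increasing on $(0,\infty)$. A Young function is a non-trivial convex $A\colon[0,\infty)\to[0,\infty]$ with $A(0)=0$; $\widetilde A(t)=\sup_{\tau\ge0}(\tau t-A(\tau))$. Conditions: (C1) if $n=1$, $\lim_{t\to\infty}t/A(t)=0$; if $n\ge2$, $\int^\infty (t/A(t))^{1/(n-1)}dt<\infty$. (C2) $0<A(t)<\infty$ for $t>0$. (C3) if $n=1$, $\lim_{t\to0^+}t/A(t)=\infty$; if $n\ge2$, $\int_0(t/A(t))^{1/(n-1)}dt=\infty$. $B=A$ if $n=1$; for $n\ge2$, $B$ is the Young conjugate of $t\mapsto t^{n'}\int_t^\infty\widetilde A(s)s^{-1-n'}ds$, $n'=n/(n-1)$. $J(0)=0$, $J(s)=sB^{-1}(\varphi(s)/s^n)$ for $s>0$, $\psi(r)=\varphi(J^{-1}(r))$. For $h\colon(0,\infty)\to(0,\infty)$ and $r>0$: $\Theta^0_h(r)=\limsup_{t\to0^+}h(rt)/h(t)$, $\Theta^\infty_h(r)=\limsup_{t\to\infty}h(rt)/h(t)$, $\Theta_h(r)=\sup_{t>0}h(rt)/h(t)$. *)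

theory Defs
  imports "HOL-Analysis.Analysis"
begin

text \<open>Gauge function (standing assumption included): nondecreasing, continuous,
  vanishing only at 0, and r \<mapsto> phi r / r^n non-increasing on (0,\<infinity>).\<close>
definition gauge :: "nat \<Rightarrow> (real \<Rightarrow> real) \<Rightarrow> bool" where
  "gauge n \<phi> \<longleftrightarrow> mono_on {0..} \<phi> \<and> continuous_on {0..} \<phi> \<and> \<phi> 0 = 0
     \<and> (\<forall>r>0. \<phi> r > 0)
     \<and> (\<forall>r s. 0 < r \<and> r \<le> s \<longrightarrow> \<phi> s / s ^ n \<le> \<phi> r / r ^ n)"

definition young_finite :: "(real \<Rightarrow> real) \<Rightarrow> bool" where
  "young_finite A \<longleftrightarrow> convex_on {0..} A \<and> A 0 = 0 \<and> (\<forall>t\<ge>0. A t \<ge> 0) \<and> (\<exists>t>0. A t \<noteq> 0)"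

definition C1 :: "nat \<Rightarrow> (real \<Rightarrow> real) \<Rightarrow> bool" where
  "C1 n A \<longleftrightarrow> (if n = 1 then ((\<lambda>t. t / A t) \<longlongrightarrow> 0) at_top
     else (\<integral>\<^sup>+ t\<in>{1..}. ennreal ((t / A t) powr (1 / (real n - 1))) \<partial>lborel) < \<infinity>)"

definition C2 :: "(real \<Rightarrow> real) \<Rightarrow> bool" where
  "C2 A \<longleftrightarrow> (\<forall>t>0. 0 < A t)"

definition C3 :: "nat \<Rightarrow> (real \<Rightarrow> real) \<Rightarrow> bool" where
  "C3 n A \<longleftrightarrow> (if n = 1 then filterlim (\<lambda>t. t / A t) at_top (at_right 0)
     else (\<integral>\<^sup>+ t\<in>{0<..1}. ennreal ((t / A t) powr (1 / (real n - 1))) \<partial>lborel) = \<infinity>)"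

definition young_conj :: "(real \<Rightarrow> real) \<Rightarrow> real \<Rightarrow> ereal" where
  "young_conj A t = (SUP \<tau>\<in>{0..}. ereal (\<tau> * t - A \<tau>))"

definition nprime :: "nat \<Rightarrow> real" where
  "nprime n = real n / (real n - 1)"

definition Efun :: "nat \<Rightarrow> (real \<Rightarrow> real) \<Rightarrow> real \<Rightarrow> ennreal" where
  "Efun n A t = ennreal (t powr nprime n) *
     (\<integral>\<^sup>+ s\<in>{t..}. e2ennreal (young_conj A s) * ennreal (s powr (-1 - nprime n)) \<partial>lborel)"

definition Bfun :: "nat \<Rightarrow> (real \<Rightarrow> real) \<Rightarrow> real \<Rightarrow> ereal" where
  "Bfun n A t = (if n = 1 then ereal (A t)
     else (SUP \<tau>\<in>{0..}. ereal (\<tau> * t) - enn2ereal (Efun n A \<tau>)))"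

definition Binv :: "nat \<Rightarrow> (real \<Rightarrow> real) \<Rightarrow> real \<Rightarrow> real" where
  "Binv n A u = Sup {\<tau>. 0 \<le> \<tau> \<and> Bfun n A \<tau> \<le> ereal u}"

definition Jr :: "nat \<Rightarrow> (real \<Rightarrow> real) \<Rightarrow> (real \<Rightarrow> real) \<Rightarrow> real \<Rightarrow> real \<Rightarrow> real" where
  "Jr n A \<phi> r s = (if s = 0 then 0 else s * Binv n A (r * \<phi> s / s ^ n))"

definition Jrinv :: "nat \<Rightarrow> (real \<Rightarrow> real) \<Rightarrow> (real \<Rightarrow> real) \<Rightarrow> real \<Rightarrow> real \<Rightarrow> real" where
  "Jrinv n A \<phi> r t = Sup {s. 0 \<le> s \<and> Jr n A \<phi> r s \<le> t}"

definition psi :: "nat \<Rightarrow> (real \<Rightarrow> real) \<Rightarrow> (real \<Rightarrow> real) \<Rightarrow> real \<Rightarrow> real" where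
  "psi n A \<phi> t = \<phi> (Jrinv n A \<phi> 1 t)"

definition Theta0 :: "(real \<Rightarrow> real) \<Rightarrow> real \<Rightarrow> ereal" where
  "Theta0 h r = Limsup (at_right 0) (\<lambda>t. ereal (h (r * t) / h t))"

definition ThetaInf :: "(real \<Rightarrow> real) \<Rightarrow> real \<Rightarrow> ereal" where
  "ThetaInf h r = Limsup at_top (\<lambda>t. ereal (h (r * t) / h t))"

definition Theta :: "(real \<Rightarrow> real) \<Rightarrow> real \<Rightarrow> ereal" where
  "Theta h r = (SUP t\<in>{0<..}. ereal (h (r * t) / h t))"

definition right_lim :: "(real \<Rightarrow> ereal) \<Rightarrow> real \<Rightarrow> ereal" where
  "right_lim F a = Lim (at_right a) F"

end

theory Submission
  imports Defs
begin

lemma ereal_inv_lt: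
  fixes L :: ereal and y :: real
  assumes "0 \<le> L" "ereal y < 1 / L" "0 < y"
  shows "L < ereal (1 / y)"
  using assms by (cases L) (auto simp: divide_ereal_def field_simps split: if_splits)

lemma one_div_ereal_nonneg: "0 \<le> (x::ereal) \<Longrightarrow> 0 \<le> 1 / x"
  by (cases x) (auto simp: divide_ereal_def)

lemma right_lim_final:
  fixes F :: "real \<Rightarrow> ereal" and X :: ereal
  assumes "0 \<le> \<rho>"
    and mono: "\<And>a b. \<rho> < a \<Longrightarrow> a \<le> b \<Longrightarrow> F a \<le> F b"
    and nn: "\<And>a. \<rho> < a \<Longrightarrow> 0 \<le> F a"
    and bnd: "\<And>a. \<rho> < a \<Longrightarrow> 1 / F a \<le> X"
  shows "1 / right_lim F \<rho> \<le> X"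
proof -
  define L where "L = (INF a\<in>{\<rho><..}. F a)"
  have lim: "(F \<longlongrightarrow> L) (at_right \<rho>)"
  proof (rule order_tendstoI)
    fix y assume "y < L"
    have "\<forall>\<^sub>F a in at_right \<rho>. \<rho> < a" by (rule eventually_at_right_less)
    then show "\<forall>\<^sub>F a in at_right \<rho>. y < F a"
    proof (rule eventually_mono)
      fix a assume "\<rho> < a"
      then have "L \<le> F a" unfolding L_def by (auto intro: INF_lower)
      with \<open>y < L\<close> show "y < F a" by auto
    qed
  next
    fix y assume "L < y"
    then obtain a1 where a1: "\<rho> < a1" "F a1 < y" unfolding L_def by (auto simp: INF_less_iff)
    show "\<forall>\<^sub>F a in at_right \<rho>. F a < y"
      unfolding eventually_at_right_field
      using a1 mono by (intro exI[of _ a1]) (meson le_less_trans less_imp_le)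
  qed
  have R: "right_lim F \<rho> = L"
    unfolding right_lim_def using lim by (rule tendsto_Lim[rotated]) simp
  have L0: "0 \<le> L" unfolding L_def using nn by (auto intro: INF_greatest)
  have X0: "0 \<le> X" using bnd[of "\<rho>+1"] nn[of "\<rho>+1"] one_div_ereal_nonneg[of "F (\<rho>+1)"] by (meson lt_ex order_trans less_add_one)
  show ?thesis unfolding R
  proof (rule dense_le)
    fix y assume y: "y < 1 / L"
    show "y \<le> X"
    proof (cases "y \<le> 0")
      case True then show ?thesis using X0 by auto
    next
      case False
      then obtain y' where y': "y = ereal y'" "0 < y'" using y
        by (cases y) auto
      then have "L < ereal (1/y')" using ereal_inv_lt[OF L0] y by auto
      then obtain a where a: "\<rho> < a" "F a < ereal (1/y')" unfolding L_def by (auto simp: INF_less_iff)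
      have "y < 1 / F a" using a nn[of a] y' by (cases "F a") (auto simp: divide_ereal_def field_simps split: if_splits)
      then show ?thesis using bnd[OF a(1)] by auto
    qed
  qed
qed



context
  fixes n :: nat and A \<phi> :: "real \<Rightarrow> real"
  assumes n1: "n \<ge> 1"
    and B0: "Bfun n A 0 \<le> 0"
    and B2: "\<exists>c>0. \<exists>T0. \<forall>t\<ge>T0. ereal (c * t ^ n) \<le> Bfun n A t"
    and B3: "\<And>K. K > 0 \<Longrightarrow> \<exists>\<delta>>0. \<forall>t. 0 \<le> t \<and> t \<le> \<delta> \<longrightarrow> Bfun n A t \<le> ereal (t ^ n / K)"
    and B4: "\<And>r \<tau> u. 1 \<le> r \<Longrightarrow> 0 \<le> \<tau> \<Longrightarrow> Bfun n A \<tau> \<le> ereal (r * u) \<Longrightarrow> Bfun n A (\<tau> / r) \<le> ereal u"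
    and gphi: "gauge n \<phi>"
begin

abbreviation "S u \<equiv> {\<tau>. 0 \<le> \<tau> \<and> Bfun n A \<tau> \<le> ereal u}"

lemma g_def': "Binv n A u = Sup (S u)" by (simp add: Binv_def)

lemma B0u: "0 \<le> u \<Longrightarrow> Bfun n A 0 \<le> ereal u" by (rule order_trans[OF B0]) simp

lemma S0: "0 \<le> u \<Longrightarrow> 0 \<in> S u" using B0u by auto

lemma S_bdd: "bdd_above (S u)"
proof -
  obtain c T0 where c: "c > 0" "\<And>t. t \<ge> T0 \<Longrightarrow> ereal (c * t ^ n) \<le> Bfun n A t" using B2 by auto
  have "\<tau> \<le> max T0 (max 1 (u/c))" if "\<tau> \<in> S u" for \<tau>
  proof (rule ccontr)
    assume "\<not> ?thesis"
    then have h: "\<tau> \<ge> T0" "\<tau> > 1" "\<tau> > u/c" by auto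
    have "\<tau> \<le> \<tau> ^ n" using power_increasing[of 1 n \<tau>] h(2) n1 by simp
    then have "c * \<tau> \<le> c * \<tau> ^ n" using c(1) by (simp add: mult_left_mono)
    moreover have "u < c * \<tau>" using h(3) c(1) by (simp add: field_simps)
    ultimately have "u < c * \<tau> ^ n" by linarith
    then have "ereal u < ereal (c * \<tau> ^ n)" by simp
    also have "\<dots> \<le> Bfun n A \<tau>" using c(2)[OF h(1)] .
    finally have "ereal u < Bfun n A \<tau>" .
    then show False using that by auto
  qed
  then show ?thesis by (intro bdd_aboveI[where M="max T0 (max 1 (u/c))"]) auto
qed

lemma g_upper: "0 \<le> \<tau> \<Longrightarrow> Bfun n A \<tau> \<le> ereal u \<Longrightarrow> \<tau> \<le> Binv n A u"
  unfolding g_def' by (rule cSup_upper) (use S_bdd in auto)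

lemma g_least: "0 \<le> u \<Longrightarrow> (\<And>\<tau>. 0 \<le> \<tau> \<Longrightarrow> Bfun n A \<tau> \<le> ereal u \<Longrightarrow> \<tau> \<le> M) \<Longrightarrow> Binv n A u \<le> M"
  unfolding g_def' by (rule cSup_least) (use S0 in auto)

lemma g_nonneg: "0 \<le> u \<Longrightarrow> 0 \<le> Binv n A u"
  using g_upper[of 0 u] B0u by auto

lemma g_mono: assumes "0 \<le> u" "u \<le> v" shows "Binv n A u \<le> Binv n A v"
proof (rule g_least[OF assms(1)])
  fix \<tau> assume t: "0 \<le> \<tau>" "Bfun n A \<tau> \<le> ereal u"
  have "Bfun n A \<tau> \<le> ereal v" using t(2) assms(2) by (meson ereal_less_eq(3) order_trans)
  then show "\<tau> \<le> Binv n A v" using g_upper t(1) by blast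
qed

lemma g_pos: assumes "u > 0" shows "Binv n A u > 0"
proof -
  obtain \<delta> where d: "\<delta> > 0" "\<And>t. 0 \<le> t \<Longrightarrow> t \<le> \<delta> \<Longrightarrow> Bfun n A t \<le> ereal (t ^ n / 1)" using B3[of 1] by auto
  define \<tau> where "\<tau> = min \<delta> (min 1 u)"
  have t: "0 < \<tau>" "\<tau> \<le> \<delta>" "\<tau> \<le> 1" "\<tau> \<le> u" using d assms by (auto simp: \<tau>_def)
  have "\<tau> ^ n \<le> \<tau>" using power_decreasing[of 1 n \<tau>] t n1 by simp
  then have h2: "ereal (\<tau> ^ n / 1) \<le> ereal u" using t by simp
  have h1: "Bfun n A \<tau> \<le> ereal (\<tau> ^ n / 1)" using d(2)[of \<tau>] t(1,2) by linarith
  have "Bfun n A \<tau> \<le> ereal u" using order_trans[OF h1 h2] .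
  then show ?thesis using g_upper[of \<tau> u] t by auto
qed

lemma g_big: assumes "K > 0" shows "\<exists>\<epsilon>>0. \<forall>u. 0 < u \<and> u \<le> \<epsilon> \<longrightarrow> K * u \<le> Binv n A u ^ n"
proof -
  obtain \<delta> where d: "\<delta> > 0" "\<And>t. 0 \<le> t \<Longrightarrow> t \<le> \<delta> \<Longrightarrow> Bfun n A t \<le> ereal (t ^ n / K)" using B3[OF assms] by auto
  show ?thesis
  proof (intro exI[of _ "\<delta> ^ n / K"] conjI allI impI)
    show "0 < \<delta> ^ n / K" using d assms by auto
    fix u assume u: "0 < u \<and> u \<le> \<delta> ^ n / K"
    define \<tau> where "\<tau> = root n (K * u)"
    have tn: "\<tau> ^ n = K * u" using u assms n1 by (simp add: \<tau>_def real_root_pow_pos2)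
    have t0: "0 \<le> \<tau>" using u assms unfolding \<tau>_def by (intro real_root_ge_zero) simp
    have "K * u \<le> \<delta> ^ n" using u assms by (simp add: field_simps)
    then have "root n (K * u) \<le> root n (\<delta> ^ n)" using n1 by (simp add: real_root_le_iff)
    then have "\<tau> \<le> \<delta>" unfolding \<tau>_def using n1 d(1) by (simp add: real_root_power_cancel)
    then have "Bfun n A \<tau> \<le> ereal (\<tau> ^ n / K)" by (rule d(2)[OF t0])
    also have "\<tau> ^ n / K = u" using tn assms by simp
    finally have "Bfun n A \<tau> \<le> ereal u" .
    then have "\<tau> \<le> Binv n A u" by (rule g_upper[OF t0])
    from power_mono[OF this t0, of n] show "K * u \<le> Binv n A u ^ n" using tn by simp
  qed
qed

lemma g_upper_bound: "\<exists>c>0. \<exists>T. T \<ge> 0 \<and> (\<forall>u\<ge>0. Binv n A u \<le> max T (root n (u / c)))"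
proof -
  obtain c T0 where c: "c > 0" "\<And>t. t \<ge> T0 \<Longrightarrow> ereal (c * t ^ n) \<le> Bfun n A t" using B2 by auto
  have "Binv n A u \<le> max (max T0 0) (root n (u / c))" if u: "u \<ge> 0" for u
  proof (rule g_least[OF u])
    fix \<tau> assume t: "0 \<le> \<tau>" "Bfun n A \<tau> \<le> ereal u"
    show "\<tau> \<le> max (max T0 0) (root n (u / c))"
    proof (cases "\<tau> \<ge> T0")
      case True
      then have "ereal (c * \<tau> ^ n) \<le> ereal u" using c(2) t(2) by (meson order_trans)
      then have "\<tau> ^ n \<le> u / c" using c(1) by (simp add: field_simps)
      then have "root n (\<tau> ^ n) \<le> root n (u / c)" using n1 by (simp add: real_root_le_iff)
      then show ?thesis using t(1) n1 by (simp add: real_root_power_cancel)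
    qed auto
  qed
  then show ?thesis using c(1) by (intro exI[of _ c] conjI exI[of _ "max T0 0"]) auto
qed

lemma g_scale: assumes "1 \<le> r" "0 < u" shows "Binv n A (r * u) \<le> r * Binv n A u"
proof (rule g_least)
  show "0 \<le> r * u" using assms by auto
  fix \<tau> assume t: "0 \<le> \<tau>" "Bfun n A \<tau> \<le> ereal (r * u)"
  have "\<tau> / r \<le> Binv n A u" using B4[OF assms(1) t] t(1) assms by (intro g_upper) auto
  then show "\<tau> \<le> r * Binv n A u" using assms by (simp add: field_simps)
qed

lemma g_ratio: assumes "0 < r" "0 < u"
  shows "Binv n A (r * u) / Binv n A u \<le> max 1 r" "0 \<le> Binv n A (r * u) / Binv n A u"
proof -
  have gp: "Binv n A u > 0" using g_pos assms by auto
  have "Binv n A (r * u) \<le> max 1 r * Binv n A u"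
  proof (cases "r \<le> 1")
    case True
    then have "Binv n A (r * u) \<le> Binv n A u" using assms by (intro g_mono) (auto simp: mult_le_cancel_right1)
    then show ?thesis using True by auto
  next
    case False
    then show ?thesis using g_scale[of r u] assms by auto
  qed
  then show "Binv n A (r * u) / Binv n A u \<le> max 1 r" using gp by (simp add: field_simps)
  show "0 \<le> Binv n A (r * u) / Binv n A u" using gp g_nonneg[of "r*u"] assms by auto
qed


lemma phi_mono: "0 \<le> a \<Longrightarrow> a \<le> b \<Longrightarrow> \<phi> a \<le> \<phi> b"
  using gphi unfolding gauge_def mono_on_def by auto

lemma phi_pos: "0 < a \<Longrightarrow> 0 < \<phi> a"
  using gphi unfolding gauge_def by auto

lemma phi0: "\<phi> 0 = 0" using gphi unfolding gauge_def by auto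

lemma phi_nonneg: "0 \<le> a \<Longrightarrow> 0 \<le> \<phi> a"
  using phi_pos phi0 by (cases "a = 0") (auto simp: less_le)

lemma phi_ratio: "0 < a \<Longrightarrow> a \<le> b \<Longrightarrow> \<phi> b / b ^ n \<le> \<phi> a / a ^ n"
  using gphi unfolding gauge_def by auto

lemma phi_cont: "continuous_on {0..} \<phi>" using gphi unfolding gauge_def by auto

lemma Jr_pos_eq: "0 < s \<Longrightarrow> Jr n A \<phi> r s = s * Binv n A (r * (\<phi> s / s ^ n))"
  by (simp add: Jr_def)

lemma Jr0: "Jr n A \<phi> r 0 = 0" by (simp add: Jr_def)

lemma J_nonneg: assumes "0 \<le> s" "0 < r" shows "0 \<le> Jr n A \<phi> r s"
proof (cases "s = 0")
  case False
  then have "0 < s" using assms by auto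
  then show ?thesis using Jr_pos_eq g_nonneg phi_nonneg assms by auto
qed (simp add: Jr0)

lemma J_pos: assumes "0 < s" "0 < r" shows "0 < Jr n A \<phi> r s"
  using Jr_pos_eq[OF assms(1)] g_pos phi_pos assms by auto

lemma J_large: assumes "0 < r" "0 < t" shows "\<exists>S\<ge>1. \<forall>s\<ge>S. t < Jr n A \<phi> r s"
proof -
  have p1: "0 < \<phi> 1" using phi_pos by auto
  define K where "K = (t ^ n + 1) / (r * \<phi> 1)"
  have K0: "K > 0" using p1 assms by (auto simp: K_def intro!: divide_pos_pos add_nonneg_pos)
  obtain \<epsilon> where e: "\<epsilon> > 0" "\<And>u. 0 < u \<Longrightarrow> u \<le> \<epsilon> \<Longrightarrow> K * u \<le> Binv n A u ^ n"
    using g_big[OF K0] by auto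
  have ge: "Binv n A \<epsilon> > 0" using g_pos e by auto
  define S where "S = max 1 (t / Binv n A \<epsilon> + 1)"
  show ?thesis
  proof (intro exI[of _ S] conjI allI impI)
    show "1 \<le> S" by (simp add: S_def)
    fix s assume sS: "S \<le> s"
    then have s1: "1 \<le> s" by (simp add: S_def)
    then have s0: "0 < s" by auto
    define v where "v = r * (\<phi> s / s ^ n)"
    have v0: "0 < v" using s0 assms phi_pos by (simp add: v_def)
    have J: "Jr n A \<phi> r s = s * Binv n A v" using Jr_pos_eq[OF s0] by (simp add: v_def)
    show "t < Jr n A \<phi> r s"
    proof (cases "v \<le> \<epsilon>")
      case True
      have "K * v \<le> Binv n A v ^ n" using e(2)[OF v0 True] .
      then have "s ^ n * (K * v) \<le> s ^ n * Binv n A v ^ n" using s0 by (simp add: mult_left_mono)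
      moreover have "s ^ n * (K * v) = K * r * \<phi> s" using s0 by (simp add: v_def field_simps)
      moreover have "K * r * \<phi> 1 \<le> K * r * \<phi> s" using phi_mono[of 1 s] s1 K0 assms by (simp add: mult_left_mono)
      moreover have "K * r * \<phi> 1 = t ^ n + 1" using p1 assms by (simp add: K_def field_simps)
      ultimately have "t ^ n < (s * Binv n A v) ^ n" by (simp add: power_mult_distrib)
      then have "t < s * Binv n A v" using s0 g_nonneg[of v] v0
        by (meson order.strict_iff_not power_mono mult_nonneg_nonneg less_imp_le not_le)
      then show ?thesis using J by simp
    next
      case False
      then have "Binv n A \<epsilon> \<le> Binv n A v" using e by (intro g_mono) auto
      then have "s * Binv n A \<epsilon> \<le> s * Binv n A v" using s0 by (simp add: mult_left_mono)
      moreover have "t < s * Binv n A \<epsilon>"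
      proof -
        have "t / Binv n A \<epsilon> < s" using sS by (simp add: S_def)
        then show ?thesis using ge by (simp add: field_simps)
      qed
      ultimately show ?thesis using J by simp
    qed
  qed
qed

lemma Jset_bdd: assumes "0 < r" shows "bdd_above {s. 0 \<le> s \<and> Jr n A \<phi> r s \<le> t}"
proof -
  have "0 < max t 1" by simp
  from J_large[OF assms this] obtain S where S: "\<And>s. s \<ge> S \<Longrightarrow> max t 1 < Jr n A \<phi> r s" by blast
  have "s \<le> S" if "Jr n A \<phi> r s \<le> t" for s using S[of s] that by force
  then show ?thesis by (intro bdd_aboveI[where M=S]) auto
qed

lemma Jinv_upper: "0 < r \<Longrightarrow> 0 \<le> s \<Longrightarrow> Jr n A \<phi> r s \<le> t \<Longrightarrow> s \<le> Jrinv n A \<phi> r t"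
  unfolding Jrinv_def by (rule cSup_upper) (use Jset_bdd in auto)

lemma Jinv_least: "0 < r \<Longrightarrow> 0 \<le> t \<Longrightarrow> (\<And>s. 0 \<le> s \<Longrightarrow> Jr n A \<phi> r s \<le> t \<Longrightarrow> s \<le> M) \<Longrightarrow> Jrinv n A \<phi> r t \<le> M"
  unfolding Jrinv_def by (rule cSup_least) (auto simp: Jr0 intro!: exI[of _ 0])

lemma Jinv_nonneg: "0 < r \<Longrightarrow> 0 \<le> t \<Longrightarrow> 0 \<le> Jrinv n A \<phi> r t"
  using Jinv_upper[of r 0 t] by (simp add: Jr0)

lemma Jinv_mono: assumes "0 < r" "0 \<le> t1" "t1 \<le> t2" shows "Jrinv n A \<phi> r t1 \<le> Jrinv n A \<phi> r t2"
  using assms by (intro Jinv_least Jinv_upper) auto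


lemma Jinv_pos: assumes "0 < r" "0 < t" shows "0 < Jrinv n A \<phi> r t"
proof -
  obtain c T where cT: "c > 0" "T \<ge> 0" "\<And>u. u \<ge> 0 \<Longrightarrow> Binv n A u \<le> max T (root n (u / c))"
    using g_upper_bound by auto
  define e where "e = c * t ^ n / r"
  have e0: "e > 0" using cT assms by (simp add: e_def)
  obtain d where d: "d > 0" "\<And>x. x \<in> {0..} \<Longrightarrow> dist x 0 < d \<Longrightarrow> dist (\<phi> x) (\<phi> 0) < e"
    using phi_cont e0 unfolding continuous_on_iff by (metis atLeast_iff order_refl)
  define s where "s = min (d/2) (t/(T+1))"
  have s0: "0 < s" using d assms cT by (simp add: s_def)
  have "\<phi> s < e" using d(2)[of s] s0 d(1) phi0 phi_nonneg[of s] by (auto simp: s_def dist_real_def)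
  then have h1: "r * \<phi> s / c \<le> t ^ n" using assms cT by (simp add: e_def field_simps)
  have h2: "s * T \<le> t"
  proof -
    have "s * T \<le> t / (T+1) * T" using cT by (intro mult_right_mono) (auto simp: s_def)
    also have "\<dots> \<le> t" using cT assms by (simp add: field_simps)
    finally show ?thesis .
  qed
  define v where "v = r * (\<phi> s / s ^ n)"
  have v0: "0 \<le> v" using phi_nonneg[of s] s0 assms by (simp add: v_def)
  have "Jr n A \<phi> r s = s * Binv n A v" using Jr_pos_eq[OF s0] by (simp add: v_def)
  also have "\<dots> \<le> s * max T (root n (v / c))" using cT(3)[OF v0] s0 by (simp add: mult_left_mono)
  also have "\<dots> = max (s * T) (s * root n (v / c))" using s0 by (simp add: max_mult_distrib_left)
  also have "s * root n (v / c) = root n (r * \<phi> s / c)"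
  proof -
    have "s * root n (v / c) = root n (s ^ n) * root n (v / c)" using s0 n1 by (simp add: real_root_power_cancel)
    also have "\<dots> = root n (s ^ n * (v / c))" by (rule real_root_mult[symmetric])
    also have "s ^ n * (v / c) = r * \<phi> s / c" using s0 by (simp add: v_def field_simps)
    finally show ?thesis .
  qed
  also have "root n (r * \<phi> s / c) \<le> root n (t ^ n)" using h1 n1 by (simp add: real_root_le_iff)
  also have "root n (t ^ n) = t" using n1 assms by (simp add: real_root_power_cancel)
  finally have "Jr n A \<phi> r s \<le> t" using h2 by simp
  then have "s \<le> Jrinv n A \<phi> r t" using Jinv_upper[OF assms(1)] s0 by auto
  then show ?thesis using s0 by auto
qed

lemma psi_pos: "0 < t \<Longrightarrow> 0 < psi n A \<phi> t"
  unfolding psi_def using Jinv_pos[of 1 t] phi_pos by auto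

lemma psi_mono: "0 \<le> t1 \<Longrightarrow> t1 \<le> t2 \<Longrightarrow> psi n A \<phi> t1 \<le> psi n A \<phi> t2"
  unfolding psi_def using Jinv_mono[of 1 t1 t2] Jinv_nonneg[of 1 t1] by (intro phi_mono) auto

lemma J_away: assumes "0 < r" "0 < \<delta>" shows "\<exists>m>0. \<forall>s\<ge>\<delta>. m < Jr n A \<phi> r s"
proof -
  obtain S where S: "S \<ge> 1" "\<And>s. s \<ge> S \<Longrightarrow> 1 < Jr n A \<phi> r s" using J_large[OF assms(1), of 1] by auto
  define v0 where "v0 = r * (\<phi> S / S ^ n)"
  have v0: "0 < v0" using S phi_pos assms by (simp add: v0_def)
  define m where "m = min 1 (\<delta> * Binv n A v0) / 2"
  have m0: "0 < m" using g_pos[OF v0] assms by (simp add: m_def)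
  show ?thesis
  proof (intro exI[of _ m] conjI allI impI m0)
    fix s assume s: "\<delta> \<le> s"
    show "m < Jr n A \<phi> r s"
    proof (cases "S \<le> s")
      case True then show ?thesis using S(2)[OF True] by (simp add: m_def)
    next
      case False
      have s0: "0 < s" using s assms by auto
      have "\<phi> S / S ^ n \<le> \<phi> s / s ^ n" using phi_ratio[OF s0, of S] False by simp
      then have "v0 \<le> r * (\<phi> s / s ^ n)" unfolding v0_def using assms by (intro mult_left_mono) auto
      then have "Binv n A v0 \<le> Binv n A (r * (\<phi> s / s ^ n))" using v0 by (intro g_mono) auto
      then have "\<delta> * Binv n A v0 \<le> s * Binv n A (r * (\<phi> s / s ^ n))"
        using s assms g_nonneg[of v0] v0 by (intro mult_mono) auto
      moreover have "m < \<delta> * Binv n A v0" using mult_pos_pos[OF assms(2) g_pos[OF v0]] unfolding m_def by linarith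
      ultimately show ?thesis using Jr_pos_eq[OF s0, of r] by simp
    qed
  qed
qed

lemma Jinv_small: assumes "0 < r" "0 < \<delta>" shows "\<exists>m>0. \<forall>t. 0 \<le> t \<and> t < m \<longrightarrow> Jrinv n A \<phi> r t \<le> \<delta>"
proof -
  obtain m where m: "m > 0" "\<And>s. s \<ge> \<delta> \<Longrightarrow> m < Jr n A \<phi> r s" using J_away[OF assms] by auto
  show ?thesis
  proof (intro exI[of _ m] conjI allI impI m(1))
    fix t assume t: "0 \<le> t \<and> t < m"
    show "Jrinv n A \<phi> r t \<le> \<delta>"
    proof (rule Jinv_least[OF assms(1)])
      show "0 \<le> t" using t by auto
      fix s assume "0 \<le> s" "Jr n A \<phi> r s \<le> t"
      then show "s \<le> \<delta>" using m(2)[of s] t by force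
    qed
  qed
qed

lemma J_compare_pt: assumes "0 < r" "0 < s" "0 < \<rho>"
  and "Binv n A (r * (\<phi> s / s ^ n)) \<le> \<rho> * Binv n A (\<phi> s / s ^ n)"
  shows "Jr n A \<phi> r s \<le> \<rho> * Jr n A \<phi> 1 s"
  using Jr_pos_eq[OF assms(2), of r] Jr_pos_eq[OF assms(2), of 1] assms(2,4)
  by (simp add: mult_left_mono mult.left_commute[of \<rho>])

lemma compare: assumes "0 < r" "0 < \<rho>" "0 < t"
  and cmp: "\<And>s. 0 < s \<Longrightarrow> s < \<delta> \<Longrightarrow> Jr n A \<phi> r s \<le> \<rho> * Jr n A \<phi> 1 s"
  and small: "Jrinv n A \<phi> 1 (t / \<rho>) < \<delta>"
  shows "Jrinv n A \<phi> 1 (t / \<rho>) \<le> Jrinv n A \<phi> r t"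
proof (rule Jinv_least)
  show "0 \<le> t / \<rho>" using assms by auto
  fix s assume s: "0 \<le> s" "Jr n A \<phi> 1 s \<le> t / \<rho>"
  show "s \<le> Jrinv n A \<phi> r t"
  proof (cases "s = 0")
    case True then show ?thesis using Jinv_nonneg assms by auto
  next
    case False
    have "s \<le> Jrinv n A \<phi> 1 (t / \<rho>)" using Jinv_upper[of 1 s] s by auto
    then have "s < \<delta>" using small by auto
    then have "Jr n A \<phi> r s \<le> \<rho> * Jr n A \<phi> 1 s" using cmp False s by auto
    also have "\<dots> \<le> t" using s(2) assms by (simp add: field_simps)
    finally show ?thesis using Jinv_upper[OF assms(1) s(1)] by auto
  qed
qed simp


lemma ereal_inv_le: "0 < x \<Longrightarrow> ereal x \<le> Y \<Longrightarrow> 1 / Y \<le> ereal (1 / x)"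
  by (cases Y) (auto simp: divide_ereal_def field_simps)

lemma main_theta: assumes r: "0 < r"
  shows "(INF t\<in>{0<..}. ereal (\<phi> (Jrinv n A \<phi> r t) / psi n A \<phi> t))
       \<ge> 1 / right_lim (Theta (psi n A \<phi>)) (real_of_ereal (Theta (Binv n A) r))"
proof -
  define \<Theta>g where "\<Theta>g = Theta (Binv n A) r"
  define M where "M = max 1 r"
  have hi: "\<Theta>g \<le> ereal M" unfolding \<Theta>g_def Theta_def
    using g_ratio(1)[OF r] by (intro SUP_least) (simp add: M_def[symmetric])
  have lo: "0 \<le> \<Theta>g" unfolding \<Theta>g_def Theta_def
    using g_ratio(2)[OF r, of 1] by (intro SUP_upper2[of 1]) auto
  define \<rho> where "\<rho> = real_of_ereal \<Theta>g"
  have e\<rho>: "ereal \<rho> = \<Theta>g" unfolding \<rho>_def using hi lo by (intro ereal_real') auto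
  have \<rho>0: "0 \<le> \<rho>" using lo e\<rho> by auto
  have R: "Binv n A (r * u) / Binv n A u \<le> \<rho>" if "0 < u" for u
  proof -
    have "ereal (Binv n A (r * u) / Binv n A u) \<le> \<Theta>g" unfolding \<Theta>g_def Theta_def
      using that by (intro SUP_upper) auto
    then show ?thesis using e\<rho> by (metis ereal_less_eq(3))
  qed
  show ?thesis unfolding \<Theta>g_def[symmetric] \<rho>_def[symmetric]
  proof (rule right_lim_final[OF \<rho>0])
    fix a b assume ab: "\<rho> < a" "a \<le> b"
    show "Theta (psi n A \<phi>) a \<le> Theta (psi n A \<phi>) b" unfolding Theta_def
    proof (rule SUP_mono)
      fix t :: real assume t: "t \<in> {0<..}"
      have "psi n A \<phi> (a * t) \<le> psi n A \<phi> (b * t)" using ab \<rho>0 t by (intro psi_mono) (auto intro: mult_right_mono)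
      then have "psi n A \<phi> (a * t) / psi n A \<phi> t \<le> psi n A \<phi> (b * t) / psi n A \<phi> t"
        using psi_pos[of t] t by (intro divide_right_mono) auto
      then show "\<exists>m\<in>{0<..}. ereal (psi n A \<phi> (a * t) / psi n A \<phi> t) \<le> ereal (psi n A \<phi> (b * m) / psi n A \<phi> m)"
        using t by (intro bexI[of _ t]) auto
    qed
  next
    fix a assume a: "\<rho> < a"
    show "0 \<le> Theta (psi n A \<phi>) a" unfolding Theta_def
      using psi_pos[of a] psi_pos[of 1] a \<rho>0 by (intro SUP_upper2[of 1]) auto
  next
    fix a assume a: "\<rho> < a"
    have a0: "0 < a" using a \<rho>0 by auto
    show "1 / Theta (psi n A \<phi>) a \<le> (INF t\<in>{0<..}. ereal (\<phi> (Jrinv n A \<phi> r t) / psi n A \<phi> t))"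
    proof (rule INF_greatest)
      fix t :: real assume "t \<in> {0<..}"
      then have t: "0 < t" by auto
      have cmp: "Jr n A \<phi> r s \<le> a * Jr n A \<phi> 1 s" if "0 < s" "s < Jrinv n A \<phi> 1 (t / a) + 1" for s
      proof (rule J_compare_pt[OF r that(1) a0])
        define v where "v = \<phi> s / s ^ n"
        have v0: "0 < v" using phi_pos that by (simp add: v_def)
        have "Binv n A (r * v) / Binv n A v \<le> a" using R[OF v0] a by auto
        then show "Binv n A (r * (\<phi> s / s ^ n)) \<le> a * Binv n A (\<phi> s / s ^ n)"
          using g_pos[OF v0] by (simp add: v_def[symmetric] field_simps)
      qed
      have "Jrinv n A \<phi> 1 (t / a) \<le> Jrinv n A \<phi> r t"
        using cmp by (intro compare[OF r a0 t]) auto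
      then have p1: "psi n A \<phi> (t / a) \<le> \<phi> (Jrinv n A \<phi> r t)"
        unfolding psi_def using Jinv_nonneg[of 1 "t/a"] t a0 by (intro phi_mono) auto
      have "ereal (psi n A \<phi> (a * (t / a)) / psi n A \<phi> (t / a)) \<le> Theta (psi n A \<phi>) a"
        unfolding Theta_def using t a0 by (intro SUP_upper) auto
      then have "ereal (psi n A \<phi> t / psi n A \<phi> (t / a)) \<le> Theta (psi n A \<phi>) a" using a0 by simp
      then have "1 / Theta (psi n A \<phi>) a \<le> ereal (1 / (psi n A \<phi> t / psi n A \<phi> (t / a)))"
        using psi_pos[of t] psi_pos[of "t/a"] t a0 by (intro ereal_inv_le) auto
      also have "1 / (psi n A \<phi> t / psi n A \<phi> (t / a)) = psi n A \<phi> (t / a) / psi n A \<phi> t" by simp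
      also have "\<dots> \<le> \<phi> (Jrinv n A \<phi> r t) / psi n A \<phi> t"
        using p1 psi_pos[of t] t by (intro divide_right_mono) auto
      finally show "1 / Theta (psi n A \<phi>) a \<le> ereal (\<phi> (Jrinv n A \<phi> r t) / psi n A \<phi> t)" by simp
    qed
  qed
qed


lemma Theta0_nonneg: assumes a0: "0 < a" shows "0 \<le> Theta0 (psi n A \<phi>) a"
proof -
  have evr: "\<forall>\<^sub>F t in at_right (0::real). 0 < t" by (rule eventually_at_right_less)
  have "0 \<le> Liminf (at_right 0) (\<lambda>t. ereal (psi n A \<phi> (a * t) / psi n A \<phi> t))"
  proof (intro Liminf_bounded eventually_mono[OF evr])
    fix t :: real assume "0 < t"
    then have "0 < psi n A \<phi> (a * t)" "0 < psi n A \<phi> t" using a0 psi_pos by auto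
    then show "0 \<le> ereal (psi n A \<phi> (a * t) / psi n A \<phi> t)" by simp
  qed
  also have "\<dots> \<le> Theta0 (psi n A \<phi>) a" unfolding Theta0_def by (intro Liminf_le_Limsup) simp
  finally show ?thesis .
qed

lemma main_theta0: assumes r: "0 < r"
    and lim: "filterlim (\<lambda>r. \<phi> r / r ^ n) at_top (at_right 0)"
  shows "Liminf (at_right 0) (\<lambda>t. ereal (\<phi> (Jrinv n A \<phi> r t) / psi n A \<phi> t))
       \<ge> 1 / right_lim (Theta0 (psi n A \<phi>)) (real_of_ereal (ThetaInf (Binv n A) r))"
proof -
  define \<Theta>g where "\<Theta>g = ThetaInf (Binv n A) r"
  define M where "M = max 1 r"
  have ev0: "\<forall>\<^sub>F u in at_top. (0::real) < u" by (rule eventually_gt_at_top)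
  have hi: "\<Theta>g \<le> ereal M" unfolding \<Theta>g_def ThetaInf_def
    using g_ratio(1)[OF r] by (intro Limsup_bounded eventually_mono[OF ev0]) (simp add: M_def[symmetric])
  have "0 \<le> Liminf at_top (\<lambda>u. ereal (Binv n A (r * u) / Binv n A u))"
    using g_ratio(2)[OF r] by (intro Liminf_bounded eventually_mono[OF ev0]) simp
  also have "\<dots> \<le> \<Theta>g" unfolding \<Theta>g_def ThetaInf_def by (intro Liminf_le_Limsup) simp
  finally have lo: "0 \<le> \<Theta>g" .
  define \<rho> where "\<rho> = real_of_ereal \<Theta>g"
  have e\<rho>: "ereal \<rho> = \<Theta>g" unfolding \<rho>_def using hi lo by (intro ereal_real') auto
  have \<rho>0: "0 \<le> \<rho>" using lo e\<rho> by auto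
  have evr: "\<forall>\<^sub>F t in at_right (0::real). 0 < t" by (rule eventually_at_right_less)
  show ?thesis unfolding \<Theta>g_def[symmetric] \<rho>_def[symmetric]
  proof (rule right_lim_final[OF \<rho>0])
    fix a b assume ab: "\<rho> < a" "a \<le> b"
    show "Theta0 (psi n A \<phi>) a \<le> Theta0 (psi n A \<phi>) b" unfolding Theta0_def
    proof (intro Limsup_mono eventually_mono[OF evr])
      fix t :: real assume t: "0 < t"
      have "psi n A \<phi> (a * t) \<le> psi n A \<phi> (b * t)" using ab \<rho>0 t by (intro psi_mono) (auto intro: mult_right_mono)
      then have "psi n A \<phi> (a * t) / psi n A \<phi> t \<le> psi n A \<phi> (b * t) / psi n A \<phi> t"
        using psi_pos[of t] t by (intro divide_right_mono) auto
      then show "ereal (psi n A \<phi> (a * t) / psi n A \<phi> t) \<le> ereal (psi n A \<phi> (b * t) / psi n A \<phi> t)" by simp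
    qed
  next
    fix a assume a: "\<rho> < a"
    have "0 \<le> Liminf (at_right 0) (\<lambda>t. ereal (psi n A \<phi> (a * t) / psi n A \<phi> t))"
      using psi_pos a \<rho>0 by (intro Liminf_bounded eventually_mono[OF evr]) (auto intro!: divide_nonneg_pos less_imp_le)
    also have "\<dots> \<le> Theta0 (psi n A \<phi>) a" unfolding Theta0_def by (intro Liminf_le_Limsup) simp
    finally show "0 \<le> Theta0 (psi n A \<phi>) a" .
  next
    fix a assume a: "\<rho> < a"
    have a0: "0 < a" using a \<rho>0 by auto
    have "\<forall>\<^sub>F u in at_top. ereal (Binv n A (r * u) / Binv n A u) < ereal a"
    proof (rule Limsup_lessD)
      show "Limsup at_top (\<lambda>u. ereal (Binv n A (r * u) / Binv n A u)) < ereal a"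
      proof -
        have "\<Theta>g < ereal a" using a by (simp add: e\<rho>[symmetric])
        then show ?thesis unfolding \<Theta>g_def ThetaInf_def .
      qed
    qed
    then obtain U where U: "\<And>u. u \<ge> U \<Longrightarrow> Binv n A (r * u) / Binv n A u < a"
      unfolding eventually_at_top_linorder by auto
    have "\<forall>\<^sub>F s in at_right 0. max U 1 \<le> \<phi> s / s ^ n" using lim unfolding filterlim_at_top by (rule allE)
    then obtain \<delta> where d: "\<delta> > 0" "\<And>s. 0 < s \<Longrightarrow> s < \<delta> \<Longrightarrow> max U 1 \<le> \<phi> s / s ^ n"
      unfolding eventually_at_right_field by auto
    have cmp: "Jr n A \<phi> r s \<le> a * Jr n A \<phi> 1 s" if "0 < s" "s < \<delta>" for s
    proof (rule J_compare_pt[OF r that(1) a0])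
      define v where "v = \<phi> s / s ^ n"
      have v: "max U 1 \<le> v" using d(2)[OF that] by (simp add: v_def)
      then have v0: "0 < v" by auto
      have "Binv n A (r * v) / Binv n A v \<le> a" using U[of v] v by auto
      then show "Binv n A (r * (\<phi> s / s ^ n)) \<le> a * Binv n A (\<phi> s / s ^ n)"
        using g_pos[OF v0] by (simp add: v_def[symmetric] field_simps)
    qed
    obtain m where m: "m > 0" "\<And>t. 0 \<le> t \<Longrightarrow> t < m \<Longrightarrow> Jrinv n A \<phi> 1 t \<le> \<delta> / 2"
      using Jinv_small[of 1 "\<delta>/2"] d(1) by auto
    have key: "psi n A \<phi> (t / a) \<le> \<phi> (Jrinv n A \<phi> r t)" if t: "0 < t" "t < a * m" for t
    proof -
      have "Jrinv n A \<phi> 1 (t / a) \<le> \<delta> / 2" using m(2)[of "t/a"] t a0 by (simp add: field_simps)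
      then have "Jrinv n A \<phi> 1 (t / a) < \<delta>" using d(1) by auto
      then have "Jrinv n A \<phi> 1 (t / a) \<le> Jrinv n A \<phi> r t"
        using cmp by (intro compare[OF r a0 t(1)]) auto
      then show ?thesis
        unfolding psi_def using Jinv_nonneg[of 1 "t/a"] t a0 by (intro phi_mono) auto
    qed
    show "1 / Theta0 (psi n A \<phi>) a \<le> Liminf (at_right 0) (\<lambda>t. ereal (\<phi> (Jrinv n A \<phi> r t) / psi n A \<phi> t))"
      unfolding le_Liminf_iff
    proof (intro allI impI)
      fix y assume y: "y < 1 / Theta0 (psi n A \<phi>) a"
      show "\<forall>\<^sub>F t in at_right 0. y < ereal (\<phi> (Jrinv n A \<phi> r t) / psi n A \<phi> t)"
      proof (cases "y \<le> 0")
        case True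
        show ?thesis unfolding eventually_at_right_field
        proof (intro exI[of _ "a * m"] conjI allI impI)
          show "0 < a * m" using a0 m by auto
          fix t :: real assume t: "0 < t" "t < a * m"
          have "0 < psi n A \<phi> (t / a)" using psi_pos t a0 by auto
          then have "0 < \<phi> (Jrinv n A \<phi> r t) / psi n A \<phi> t" using key[OF t] psi_pos[OF t(1)] by auto
          then show "y < ereal (\<phi> (Jrinv n A \<phi> r t) / psi n A \<phi> t)" using True by (intro le_less_trans[OF True]) simp
        qed
      next
        case False
        have "y < \<infinity>" using y by (rule less_le_trans) simp
        then have yinf: "y \<noteq> \<infinity>" by simp
        have yninf: "y \<noteq> -\<infinity>" using False by auto
        obtain y' where y': "y = ereal y'" using yinf yninf by (cases y) auto
        then have y'0: "0 < y'" using False by simp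
        have L0: "0 \<le> Theta0 (psi n A \<phi>) a" by (rule Theta0_nonneg[OF a0])
        have "ereal y' < 1 / Theta0 (psi n A \<phi>) a" using y unfolding y' .
        then have "Theta0 (psi n A \<phi>) a < ereal (1 / y')" by (rule ereal_inv_lt[OF L0 _ y'0])
        then have "\<forall>\<^sub>F x in at_right 0. ereal (psi n A \<phi> (a * x) / psi n A \<phi> x) < ereal (1 / y')"
          unfolding Theta0_def by (rule Limsup_lessD)
        then obtain d2 where d2: "d2 > 0" "\<And>x. 0 < x \<Longrightarrow> x < d2 \<Longrightarrow> psi n A \<phi> (a * x) / psi n A \<phi> x < 1 / y'"
          unfolding eventually_at_right_field by auto
        show ?thesis unfolding eventually_at_right_field
        proof (intro exI[of _ "min (a * m) (a * d2)"] conjI allI impI)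
          show "0 < min (a * m) (a * d2)" using a0 m d2 by auto
          fix t :: real assume t: "0 < t" "t < min (a * m) (a * d2)"
          have "t < a * d2" using t by simp
          then have x: "0 < t / a" "t / a < d2" using t(1) a0 by (auto simp: field_simps)
          have p1: "0 < psi n A \<phi> (t / a)" using psi_pos x by auto
          have "psi n A \<phi> t / psi n A \<phi> (t / a) < 1 / y'" using d2(2)[OF x] a0 by simp
          then have "y' * psi n A \<phi> t < psi n A \<phi> (t / a)" using p1 y'0 by (simp add: field_simps)
          also have "\<dots> \<le> \<phi> (Jrinv n A \<phi> r t)" using t by (intro key) auto
          finally have "y' < \<phi> (Jrinv n A \<phi> r t) / psi n A \<phi> t" using psi_pos[OF t(1)] by (simp add: field_simps)
          then show "y < ereal (\<phi> (Jrinv n A \<phi> r t) / psi n A \<phi> t)" using y' by simp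
        qed
      qed
    qed
  qed
qed

end



lemma A_scale:
  assumes "young_finite A" "0 \<le> l" "l \<le> 1" "0 \<le> y"
  shows "A (l * y) \<le> l * A y"
proof -
  have c: "convex_on {0..} A" and A0: "A 0 = 0" using assms(1) unfolding young_finite_def by auto
  have "A ((1 - l) *\<^sub>R 0 + l *\<^sub>R y) \<le> (1 - l) * A 0 + l * A y"
    using convex_onD[OF c, of l 0 y] assms by auto
  then show ?thesis using A0 by simp
qed

lemma B_n1:
  assumes yf: "young_finite A" and c1: "C1 1 A" and c2: "C2 A" and c3: "C3 1 A"
  shows "Bfun 1 A 0 \<le> 0"
    and "\<exists>c>0. \<exists>T0. \<forall>t\<ge>T0. ereal (c * t ^ 1) \<le> Bfun 1 A t"
    and "\<And>K. K > 0 \<Longrightarrow> \<exists>\<delta>>0. \<forall>t. 0 \<le> t \<and> t \<le> \<delta> \<longrightarrow> Bfun 1 A t \<le> ereal (t ^ 1 / K)"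
    and "\<And>r \<tau> u. 1 \<le> r \<Longrightarrow> 0 \<le> \<tau> \<Longrightarrow> Bfun 1 A \<tau> \<le> ereal (r * u) \<Longrightarrow> Bfun 1 A (\<tau> / r) \<le> ereal u"
proof -
  have A0: "A 0 = 0" using yf unfolding young_finite_def by auto
  have Bf: "Bfun 1 A t = ereal (A t)" for t by (simp add: Bfun_def)
  show "Bfun 1 A 0 \<le> 0" using A0 unfolding Bf by simp
  show "\<exists>c>0. \<exists>T0. \<forall>t\<ge>T0. ereal (c * t ^ 1) \<le> Bfun 1 A t"
  proof -
    have A1: "0 < A 1" using c2 unfolding C2_def by auto
    have "ereal (A 1 * t ^ 1) \<le> Bfun 1 A t" if t: "1 \<le> t" for t :: real
    proof -
    have "A ((1/t) * t) \<le> (1/t) * A t" using A_scale[OF yf, of "1/t" t] t by auto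
    then have "A 1 \<le> A t / t" using t by simp
    then show "ereal (A 1 * t ^ 1) \<le> Bfun 1 A t" using t unfolding Bf by (simp add: field_simps)
    qed
    then show ?thesis using A1 by blast
  qed
  show "\<exists>\<delta>>0. \<forall>t. 0 \<le> t \<and> t \<le> \<delta> \<longrightarrow> Bfun 1 A t \<le> ereal (t ^ 1 / K)" if K: "K > 0" for K
  proof -
    have "filterlim (\<lambda>t. t / A t) at_top (at_right 0)" using c3 unfolding C3_def by simp
    then have "\<forall>\<^sub>F t in at_right 0. K \<le> t / A t" unfolding filterlim_at_top by (rule allE)
    then obtain d where d: "d > 0" "\<And>t. 0 < t \<Longrightarrow> t < d \<Longrightarrow> K \<le> t / A t"
      unfolding eventually_at_right_field by auto
    show ?thesis
    proof (intro exI[of _ "d/2"] conjI allI impI)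
      show "0 < d / 2" using d by auto
      fix t :: real assume t: "0 \<le> t \<and> t \<le> d / 2"
      show "Bfun 1 A t \<le> ereal (t ^ 1 / K)"
      proof (cases "t = 0")
        case True then show ?thesis using A0 unfolding Bf by simp
      next
        case False
        then have t0: "0 < t" using t by auto
        have Ap: "0 < A t" using c2 t0 unfolding C2_def by auto
        have "K \<le> t / A t" using d(2)[OF t0] t d(1) by auto
        then have "A t \<le> t / K" using Ap K by (simp add: field_simps)
        then show ?thesis unfolding Bf by simp
      qed
    qed
  qed
  show "Bfun 1 A (\<tau> / r) \<le> ereal u" if "1 \<le> r" "0 \<le> \<tau>" "Bfun 1 A \<tau> \<le> ereal (r * u)" for r \<tau> u
  proof -
    have "A ((1/r) * \<tau>) \<le> (1/r) * A \<tau>" using A_scale[OF yf, of "1/r" \<tau>] that by auto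
    moreover have "A \<tau> \<le> r * u" using that(3) unfolding Bf by simp
    ultimately have h: "A (\<tau> / r) \<le> A \<tau> / r" "A \<tau> \<le> r * u" by auto
    have "A \<tau> / r \<le> u" using h(2) that(1) by (simp add: divide_le_eq mult.commute)
    then have "A (\<tau> / r) \<le> u" using h(1) by linarith
    then show ?thesis unfolding Bf by simp
  qed
qed



definition aa :: "(real \<Rightarrow> real) \<Rightarrow> real \<Rightarrow> real" where
  "aa A s = (if s \<le> 0 then 0 else A s / s)"

lemma aa_mono: assumes yf: "young_finite A" and c2: "C2 A" shows "mono (aa A)"
proof (rule monoI)
  fix x y :: real assume xy: "x \<le> y"
  show "aa A x \<le> aa A y"
  proof (cases "x \<le> 0")
    case True
    show ?thesis
    proof (cases "y \<le> 0")
      case False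
      then have "0 < A y" using c2 unfolding C2_def by auto
      then show ?thesis using True False unfolding aa_def by auto
    qed (use True in \<open>simp add: aa_def\<close>)
  next
    case False
    then have x0: "0 < x" by auto
    then have "A ((x/y) * y) \<le> (x/y) * A y" using xy by (intro A_scale[OF yf]) auto
    then have "A x \<le> (x/y) * A y" using x0 xy by simp
    then have "A x / x \<le> A y / y" using x0 xy by (simp add: field_simps)
    then show ?thesis using x0 xy unfolding aa_def by auto
  qed
qed

lemma aa_meas[measurable]: "young_finite A \<Longrightarrow> C2 A \<Longrightarrow> aa A \<in> borel_measurable borel"
  by (rule borel_measurable_mono[OF aa_mono])

lemma aa_pos: "C2 A \<Longrightarrow> 0 < s \<Longrightarrow> 0 < aa A s"
  unfolding aa_def C2_def by auto

lemma tail_int: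
  assumes "e < -1" "0 < c"
  shows "(\<integral>\<^sup>+ x. ennreal (x powr e) * indicator {c..} x \<partial>lborel) = ennreal (- (c powr (e+1)) / (e+1))"
  using assms by (intro nn_integral_has_integral_lebesgue' has_integral_powr_to_inf) auto

lemma tonelli_threshold:
  fixes h :: "real \<Rightarrow> real" and S :: "real set"
  assumes hm[measurable]: "h \<in> borel_measurable borel" and Sm[measurable]: "S \<in> sets borel"
    and hp: "\<And>x. x \<in> S \<Longrightarrow> 0 < h x" and e: "e < -1"
  shows "(\<integral>\<^sup>+ s. (\<integral>\<^sup>+ x. (if x \<in> S \<and> h x \<le> s then ennreal (s powr e) else 0) \<partial>lborel) \<partial>lborel)
       = (\<integral>\<^sup>+ x. indicator S x * ennreal (- (h x powr (e+1)) / (e+1)) \<partial>lborel)"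
proof -
  have "(\<integral>\<^sup>+ s. (\<integral>\<^sup>+ x. (if x \<in> S \<and> h x \<le> s then ennreal (s powr e) else 0) \<partial>lborel) \<partial>lborel)
      = (\<integral>\<^sup>+ x. (\<integral>\<^sup>+ s. (if x \<in> S \<and> h x \<le> s then ennreal (s powr e) else 0) \<partial>lborel) \<partial>lborel)"
    by (rule lborel_pair.Fubini') measurable
  also have "\<dots> = (\<integral>\<^sup>+ x. indicator S x * ennreal (- (h x powr (e+1)) / (e+1)) \<partial>lborel)"
  proof (rule nn_integral_cong)
    fix x :: real
    show "(\<integral>\<^sup>+ s. (if x \<in> S \<and> h x \<le> s then ennreal (s powr e) else 0) \<partial>lborel)
        = indicator S x * ennreal (- (h x powr (e+1)) / (e+1))"
    proof (cases "x \<in> S")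
      case True
      have "(\<integral>\<^sup>+ s. (if x \<in> S \<and> h x \<le> s then ennreal (s powr e) else 0) \<partial>lborel)
          = (\<integral>\<^sup>+ s. ennreal (s powr e) * indicator {h x..} s \<partial>lborel)"
        using True by (intro nn_integral_cong) (auto simp: indicator_def)
      also have "\<dots> = ennreal (- (h x powr (e+1)) / (e+1))" by (rule tail_int[OF e hp[OF True]])
      finally show ?thesis using True by simp
    qed simp
  qed
  finally show ?thesis .
qed


lemma conj_upper:
  assumes yf: "young_finite A" and c2: "C2 A" and s: "0 \<le> s"
  shows "e2ennreal (young_conj A s) \<le> ennreal s * emeasure lborel {\<sigma>. 0 < \<sigma> \<and> aa A \<sigma> < s}"
proof -
  define U where "U = {\<sigma>. 0 < \<sigma> \<and> aa A \<sigma> < s}"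
  have Um: "U \<in> sets lborel" unfolding U_def using yf c2 by measurable
  have A0: "A 0 = 0" and Anonneg: "\<And>t. t \<ge> 0 \<Longrightarrow> A t \<ge> 0" using yf unfolding young_finite_def by auto
  have "young_conj A s \<le> enn2ereal (ennreal s * emeasure lborel U)"
    unfolding young_conj_def
  proof (rule SUP_least)
    fix \<tau> :: real assume "\<tau> \<in> {0..}"
    then have t0: "0 \<le> \<tau>" by auto
    show "ereal (\<tau> * s - A \<tau>) \<le> enn2ereal (ennreal s * emeasure lborel U)"
    proof (cases "\<tau> * s - A \<tau> \<le> 0")
      case True
      then have "ereal (\<tau> * s - A \<tau>) \<le> 0" by simp
      then show ?thesis using enn2ereal_nonneg order_trans by blast
    next
      case False
      then have tp: "0 < \<tau>" using t0 A0 by (cases "\<tau> = 0") auto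
      have "A \<tau> / \<tau> < s" using False tp by (simp add: field_simps)
      then have at: "aa A \<tau> < s" using tp by (simp add: aa_def)
      have "{0<..\<tau>} \<subseteq> U"
      proof
        fix \<sigma> assume "\<sigma> \<in> {0<..\<tau>}"
        then have "0 < \<sigma>" "\<sigma> \<le> \<tau>" by auto
        then have "aa A \<sigma> \<le> aa A \<tau>" using aa_mono[OF yf c2] by (auto dest: monoD)
        then show "\<sigma> \<in> U" using at \<open>0 < \<sigma>\<close> by (auto simp: U_def)
      qed
      then have "emeasure lborel {0<..\<tau>} \<le> emeasure lborel U" by (intro emeasure_mono Um)
      then have "ennreal \<tau> \<le> emeasure lborel U" using tp by simp
      then have "ennreal s * ennreal \<tau> \<le> ennreal s * emeasure lborel U" by (rule mult_left_mono) simp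
      then have "enn2ereal (ennreal (s * \<tau>)) \<le> enn2ereal (ennreal s * emeasure lborel U)"
        using s t0 by (simp add: ennreal_mult less_eq_ennreal.rep_eq[symmetric])
      moreover have "ereal (\<tau> * s - A \<tau>) \<le> enn2ereal (ennreal (s * \<tau>))"
        using s t0 Anonneg[OF t0] by (simp add: mult.commute)
      ultimately show ?thesis by (rule order_trans[rotated])
    qed
  qed
  then have "e2ennreal (young_conj A s) \<le> e2ennreal (enn2ereal (ennreal s * emeasure lborel U))"
    by (rule e2ennreal_mono)
  then show ?thesis unfolding U_def by simp
qed


lemma np_eq: "n \<ge> 2 \<Longrightarrow> nprime n = 1 + 1 / (real n - 1)"
  unfolding nprime_def by (simp add: field_simps)

lemma Efun_1: "Efun n A 1 = (\<integral>\<^sup>+ s. e2ennreal (young_conj A s) * ennreal (s powr (-1 - nprime n)) * indicator {1..} s \<partial>lborel)"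
  by (simp add: Efun_def)

lemma Efun_le_1: assumes "1 \<le> \<tau>" shows "Efun n A \<tau> \<le> ennreal (\<tau> powr nprime n) * Efun n A 1"
proof -
  have "(\<integral>\<^sup>+ s. e2ennreal (young_conj A s) * ennreal (s powr (-1 - nprime n)) * indicator {\<tau>..} s \<partial>lborel)
      \<le> (\<integral>\<^sup>+ s. e2ennreal (young_conj A s) * ennreal (s powr (-1 - nprime n)) * indicator {1..} s \<partial>lborel)"
    using assms by (intro nn_integral_mono) (auto simp: indicator_def)
  then show ?thesis unfolding Efun_def[of n A \<tau>] Efun_1 by (rule mult_left_mono) simp
qed

lemma E1_finite:
  assumes n2: "n \<ge> 2" and yf: "young_finite A" and c1: "C1 n A" and c2: "C2 A"
  shows "Efun n A 1 < \<infinity>"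
proof -
  define p where "p = 1 / (real n - 1)"
  define np where "np = nprime n"
  have p0: "0 < p" using n2 by (simp add: p_def)
  have npp: "np = 1 + p" using np_eq[OF n2] by (simp add: np_def p_def)
  have e: "- np < -1" using p0 npp by simp
  have [measurable]: "aa A \<in> borel_measurable borel" using yf c2 by (rule aa_meas)
  have A0: "A 0 = 0" and Anonneg: "\<And>t. t \<ge> 0 \<Longrightarrow> A t \<ge> 0" using yf unfolding young_finite_def by auto
  have step1: "e2ennreal (young_conj A s) * ennreal (s powr (-1 - np)) * indicator {1..} s
      \<le> (\<integral>\<^sup>+ \<sigma>. (if \<sigma> \<in> {0<..} \<and> max 1 (aa A \<sigma>) \<le> s then ennreal (s powr (- np)) else 0) \<partial>lborel)" for s
  proof (cases "1 \<le> s")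
    case True
    define U where "U = {\<sigma>. 0 < \<sigma> \<and> aa A \<sigma> < s}"
    have Um: "U \<in> sets lborel" unfolding U_def by measurable
    have "e2ennreal (young_conj A s) * ennreal (s powr (-1 - np)) * indicator {1..} s
        = e2ennreal (young_conj A s) * ennreal (s powr (-1 - np))" using True by simp
    also have "\<dots> \<le> ennreal s * emeasure lborel U * ennreal (s powr (-1 - np))"
      unfolding U_def using True by (intro mult_right_mono conj_upper[OF yf c2]) auto
    also have "\<dots> = ennreal (s powr (- np)) * emeasure lborel U"
    proof -
      have "s * s powr (-1 - np) = s powr (- np)" using True by (simp add: powr_add[symmetric] powr_mult_base)
      then have "ennreal s * ennreal (s powr (-1 - np)) = ennreal (s powr (- np))"
        using True by (simp add: ennreal_mult[symmetric])
      then show ?thesis by (metis mult.assoc mult.commute)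
    qed
    also have "\<dots> = (\<integral>\<^sup>+ \<sigma>. ennreal (s powr (- np)) * indicator U \<sigma> \<partial>lborel)"
      using Um by (simp add: nn_integral_cmult_indicator)
    also have "\<dots> \<le> (\<integral>\<^sup>+ \<sigma>. (if \<sigma> \<in> {0<..} \<and> max 1 (aa A \<sigma>) \<le> s then ennreal (s powr (- np)) else 0) \<partial>lborel)"
      using True by (intro nn_integral_mono) (auto simp: U_def indicator_def)
    finally show ?thesis .
  qed simp
  have "Efun n A 1 \<le> (\<integral>\<^sup>+ s. (\<integral>\<^sup>+ \<sigma>. (if \<sigma> \<in> {0<..} \<and> max 1 (aa A \<sigma>) \<le> s then ennreal (s powr (- np)) else 0) \<partial>lborel) \<partial>lborel)"
    unfolding Efun_1 np_def[symmetric] by (intro nn_integral_mono step1)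
  also have "\<dots> = (\<integral>\<^sup>+ \<sigma>. indicator {0<..} \<sigma> * ennreal (- (max 1 (aa A \<sigma>) powr (- np + 1)) / (- np + 1)) \<partial>lborel)"
    by (rule tonelli_threshold[OF _ _ _ e]) auto
  also have "\<dots> \<le> (\<integral>\<^sup>+ \<sigma>. ennreal (1/p) * indicator {0<..<1} \<sigma> + ennreal (1/p) * (ennreal ((1 / aa A \<sigma>) powr p) * indicator {1..} \<sigma>) \<partial>lborel)"
  proof (intro nn_integral_mono)
    fix \<sigma> :: real
    define c where "c = max 1 (aa A \<sigma>)"
    have c1': "1 \<le> c" by (simp add: c_def)
    have eq: "- (c powr (- np + 1)) / (- np + 1) = c powr (- p) / p" using npp p0 by (simp add: field_simps)
    have goal': "indicator {0<..} \<sigma> * ennreal (c powr (- p) / p)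
        \<le> ennreal (1/p) * indicator {0<..<1} \<sigma> + ennreal (1/p) * (ennreal ((1 / aa A \<sigma>) powr p) * indicator {1..} \<sigma>)"
    proof (cases "0 < \<sigma>")
      case True
      show ?thesis
      proof (cases "\<sigma> < 1")
        case True2: True
        have "c powr (- p) \<le> 1 powr (- p)" using c1' p0 by (intro powr_mono2') auto
        then have "c powr (- p) / p \<le> 1 / p" using p0 by (simp add: divide_right_mono)
        then show ?thesis using True True2 by (simp add: ennreal_leI)
      next
        case False
        have ap: "0 < aa A \<sigma>" using aa_pos[OF c2 True] .
        have "c powr (- p) \<le> aa A \<sigma> powr (- p)" using ap p0 by (intro powr_mono2') (auto simp: c_def)
        also have "aa A \<sigma> powr (- p) = (1 / aa A \<sigma>) powr p" using ap by (simp add: powr_minus divide_inverse inverse_powr)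
        finally have "c powr (- p) / p \<le> 1 / p * (1 / aa A \<sigma>) powr p" using p0 by (simp add: divide_right_mono)
        then have "ennreal (c powr (- p) / p) \<le> ennreal (1/p) * ennreal ((1 / aa A \<sigma>) powr p)"
          using p0 by (simp add: ennreal_mult[symmetric])
        then show ?thesis using True False by simp
      qed
    qed simp
    show "indicator {0<..} \<sigma> * ennreal (- (max 1 (aa A \<sigma>) powr (- np + 1)) / (- np + 1))
        \<le> ennreal (1/p) * indicator {0<..<1} \<sigma> + ennreal (1/p) * (ennreal ((1 / aa A \<sigma>) powr p) * indicator {1..} \<sigma>)"
      using goal' by (simp only: c_def[symmetric] eq)
  qed
  also have "\<dots> = ennreal (1/p) * emeasure lborel {0<..<1::real} + ennreal (1/p) * (\<integral>\<^sup>+ \<sigma>. ennreal ((1 / aa A \<sigma>) powr p) * indicator {1..} \<sigma> \<partial>lborel)"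
    by (subst nn_integral_add) (auto simp: nn_integral_cmult_indicator nn_integral_cmult)
  finally have ch: "Efun n A 1 \<le> ennreal (1/p) * emeasure lborel {0<..<1::real} + ennreal (1/p) * (\<integral>\<^sup>+ \<sigma>. ennreal ((1 / aa A \<sigma>) powr p) * indicator {1..} \<sigma> \<partial>lborel)" .
  have "(\<integral>\<^sup>+ \<sigma>. ennreal ((1 / aa A \<sigma>) powr p) * indicator {1..} \<sigma> \<partial>lborel)
      = (\<integral>\<^sup>+ t. ennreal ((t / A t) powr p) * indicator {1..} t \<partial>lborel)"
    by (intro nn_integral_cong) (auto simp: indicator_def aa_def)
  also have "\<dots> < \<infinity>" using c1 n2 unfolding C1_def p_def by auto
  finally have X: "(\<integral>\<^sup>+ \<sigma>. ennreal ((1 / aa A \<sigma>) powr p) * indicator {1..} \<sigma> \<partial>lborel) < \<infinity>" .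
  have "ennreal (1/p) * emeasure lborel {0<..<1::real} + ennreal (1/p) * (\<integral>\<^sup>+ \<sigma>. ennreal ((1 / aa A \<sigma>) powr p) * indicator {1..} \<sigma> \<partial>lborel) < \<infinity>"
    using X by (simp add: ennreal_mult_less_top)
  then show ?thesis using ch by (rule le_less_trans[rotated])
qed


lemma conj_lower:
  assumes yf: "young_finite A" and c2: "C2 A" and s: "0 < s"
  shows "ennreal (s/2) * emeasure lborel {\<sigma>. 0 < \<sigma> \<and> \<sigma> \<le> 1 \<and> 2 * aa A \<sigma> \<le> s} \<le> e2ennreal (young_conj A s)"
proof -
  define V where "V = {\<sigma>. 0 < \<sigma> \<and> \<sigma> \<le> 1 \<and> 2 * aa A \<sigma> \<le> s}"
  have A0: "A 0 = 0" using yf unfolding young_finite_def by auto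
  have up: "ereal (\<tau> * s - A \<tau>) \<le> young_conj A s" if "0 \<le> \<tau>" for \<tau>
    unfolding young_conj_def using that by (intro SUP_upper) auto
  show ?thesis
  proof (cases "V = {}")
    case True then show ?thesis by (simp add: V_def[symmetric])
  next
    case False
    have bdd: "bdd_above V" unfolding V_def by (rule bdd_aboveI[where M=1]) auto
    define T where "T = Sup V"
    obtain \<sigma>0 where s0: "\<sigma>0 \<in> V" using False by auto
    have T0: "0 \<le> T" using cSup_upper[OF s0 bdd] s0 by (auto simp: T_def V_def)
    have "V \<subseteq> {0..T}" using cSup_upper[OF _ bdd] by (auto simp: T_def V_def)
    then have "emeasure lborel V \<le> emeasure lborel {0..T}" by (intro emeasure_mono) auto
    then have mV: "emeasure lborel V \<le> ennreal T" using T0 by simp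
    have key: "ereal (s/2 * T) \<le> young_conj A s"
    proof (rule dense_le)
      fix y assume y: "y < ereal (s/2 * T)"
      show "y \<le> young_conj A s"
      proof (cases "y \<le> 0")
        case True
        have "ereal (0 * s - A 0) \<le> young_conj A s" by (rule up) simp
        then have "0 \<le> young_conj A s" using A0 by (simp add: zero_ereal_def)
        then show ?thesis using True by (rule order_trans[rotated])
      next
        case False
        then obtain y' where y': "y = ereal y'" using y by (cases y) auto
        have "y' / (s/2) < T" using y s False y' by (simp add: field_simps)
        then obtain \<tau> where t: "\<tau> \<in> V" "y' / (s/2) < \<tau>" unfolding T_def using less_cSup_iff[OF \<open>V \<noteq> {}\<close> bdd] by blast
        have tp: "0 < \<tau>" and at: "2 * aa A \<tau> \<le> s" using t(1) by (auto simp: V_def)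
        have "A \<tau> = \<tau> * aa A \<tau>" using tp by (simp add: aa_def)
        also have "\<dots> \<le> \<tau> * (s / 2)" using at tp by (intro mult_left_mono) auto
        finally have "y' < \<tau> * s - A \<tau>" using t(2) s by (simp add: field_simps)
        then have "y < ereal (\<tau> * s - A \<tau>)" using y' by simp
        then show ?thesis using up[of \<tau>] tp by auto
      qed
    qed
    have "ennreal (s/2) * emeasure lborel V \<le> ennreal (s/2) * ennreal T" using mV by (rule mult_left_mono) simp
    also have "\<dots> = e2ennreal (ereal (s/2 * T))" using s T0 by (simp add: ennreal_mult[symmetric])
    also have "\<dots> \<le> e2ennreal (young_conj A s)" using key by (rule e2ennreal_mono)
    finally show ?thesis unfolding V_def .
  qed
qed


definition GG :: "nat \<Rightarrow> (real \<Rightarrow> real) \<Rightarrow> real \<Rightarrow> ennreal" where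
  "GG n A \<tau> = (\<integral>\<^sup>+ \<sigma>. indicator {0<..1} \<sigma> * ennreal ((max \<tau> (2 * aa A \<sigma>)) powr (- (1 / (real n - 1)))) \<partial>lborel)"

lemma E_lower:
  assumes n2: "n \<ge> 2" and yf: "young_finite A" and c2: "C2 A" and t: "0 < \<tau>"
  shows "ennreal (\<tau> powr nprime n) * (ennreal (1/2) * (ennreal (real n - 1) * GG n A \<tau>)) \<le> Efun n A \<tau>"
proof -
  define p where "p = 1 / (real n - 1)"
  define np where "np = nprime n"
  have p0: "0 < p" using n2 by (simp add: p_def)
  have npp: "np = 1 + p" using np_eq[OF n2] by (simp add: np_def p_def)
  have e: "- np < -1" using p0 npp by simp
  have [measurable]: "aa A \<in> borel_measurable borel" using yf c2 by (rule aa_meas)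
  define F where "F s = (\<integral>\<^sup>+ \<sigma>. (if \<sigma> \<in> {0<..1} \<and> max \<tau> (2 * aa A \<sigma>) \<le> s then ennreal (s powr (- np)) else 0) \<partial>lborel)" for s
  have Fm: "F \<in> borel_measurable lborel" unfolding F_def by measurable
  have pw: "ennreal (1/2) * F s \<le> e2ennreal (young_conj A s) * ennreal (s powr (-1 - np)) * indicator {\<tau>..} s" for s
  proof (cases "\<tau> \<le> s")
    case False
    have "\<And>\<sigma>. \<not> (\<sigma> \<in> {0<..1} \<and> max \<tau> (2 * aa A \<sigma>) \<le> s)" using False by auto
    have "F s = 0" unfolding F_def using False by simp
    then show ?thesis by simp
  next
    case True
    then have s0: "0 < s" using t by auto
    define V where "V = {\<sigma>. 0 < \<sigma> \<and> \<sigma> \<le> 1 \<and> 2 * aa A \<sigma> \<le> s}"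
    have Vm: "V \<in> sets lborel" unfolding V_def by measurable
    have "F s = (\<integral>\<^sup>+ \<sigma>. ennreal (s powr (- np)) * indicator V \<sigma> \<partial>lborel)"
      unfolding F_def using True by (intro nn_integral_cong) (auto simp: V_def indicator_def)
    also have "\<dots> = ennreal (s powr (- np)) * emeasure lborel V" using Vm by (simp add: nn_integral_cmult_indicator)
    finally have Fs: "F s = ennreal (s powr (- np)) * emeasure lborel V" .
    have h: "1/2 * s powr (- np) = s / 2 * s powr (-1 - np)" using s0 by (simp add: powr_add[symmetric] powr_mult_base)
    have l: "ennreal (1/2) * ennreal (s powr (- np)) = ennreal (1/2 * s powr (- np))" by (rule ennreal_mult[symmetric]) auto
    have r: "ennreal (s / 2) * ennreal (s powr (-1 - np)) = ennreal (s / 2 * s powr (-1 - np))"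
      using s0 by (intro ennreal_mult[symmetric]) auto
    have "ennreal (1/2) * ennreal (s powr (- np)) = ennreal (s / 2) * ennreal (s powr (-1 - np))"
      by (simp only: l r h)
    then have "ennreal (1/2) * F s = ennreal (s / 2) * emeasure lborel V * ennreal (s powr (-1 - np))"
      unfolding Fs by (metis mult.assoc mult.commute)
    also have "\<dots> \<le> e2ennreal (young_conj A s) * ennreal (s powr (-1 - np))"
      unfolding V_def by (intro mult_right_mono conj_lower[OF yf c2 s0]) simp
    finally show ?thesis using True by simp
  qed
  have "ennreal (1/2) * (\<integral>\<^sup>+ s. F s \<partial>lborel) = (\<integral>\<^sup>+ s. ennreal (1/2) * F s \<partial>lborel)"
    by (rule nn_integral_cmult[OF Fm, symmetric])
  also have "\<dots> \<le> (\<integral>\<^sup>+ s. e2ennreal (young_conj A s) * ennreal (s powr (-1 - np)) * indicator {\<tau>..} s \<partial>lborel)"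
    by (intro nn_integral_mono pw)
  finally have I: "ennreal (1/2) * (\<integral>\<^sup>+ s. F s \<partial>lborel) \<le> (\<integral>\<^sup>+ s. e2ennreal (young_conj A s) * ennreal (s powr (-1 - np)) * indicator {\<tau>..} s \<partial>lborel)" .
  have "(\<integral>\<^sup>+ s. F s \<partial>lborel) = (\<integral>\<^sup>+ \<sigma>. indicator {0<..1} \<sigma> * ennreal (- (max \<tau> (2 * aa A \<sigma>) powr (- np + 1)) / (- np + 1)) \<partial>lborel)"
    unfolding F_def using t by (intro tonelli_threshold[OF _ _ _ e]) auto
  also have "\<dots> = (\<integral>\<^sup>+ \<sigma>. ennreal (real n - 1) * (indicator {0<..1} \<sigma> * ennreal ((max \<tau> (2 * aa A \<sigma>)) powr (- p))) \<partial>lborel)"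
  proof (intro nn_integral_cong)
    fix \<sigma> :: real
    have q: "- np + 1 = - p" using npp by simp
    have "- (max \<tau> (2 * aa A \<sigma>) powr (- p)) / (- p) = (real n - 1) * (max \<tau> (2 * aa A \<sigma>)) powr (- p)"
      using n2 by (simp add: p_def)
    then have "- (max \<tau> (2 * aa A \<sigma>) powr (- np + 1)) / (- np + 1) = (real n - 1) * (max \<tau> (2 * aa A \<sigma>)) powr (- p)"
      unfolding q .
    then show "indicator {0<..1} \<sigma> * ennreal (- (max \<tau> (2 * aa A \<sigma>) powr (- np + 1)) / (- np + 1))
      = ennreal (real n - 1) * (indicator {0<..1} \<sigma> * ennreal ((max \<tau> (2 * aa A \<sigma>)) powr (- p)))"
      using n2 by (simp add: ennreal_mult mult.left_commute)
  qed
  also have "\<dots> = ennreal (real n - 1) * GG n A \<tau>" unfolding GG_def p_def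
    by (rule nn_integral_cmult) measurable
  finally have "ennreal (1/2) * (ennreal (real n - 1) * GG n A \<tau>) \<le> (\<integral>\<^sup>+ s. e2ennreal (young_conj A s) * ennreal (s powr (-1 - np)) * indicator {\<tau>..} s \<partial>lborel)"
    using I by simp
  then show ?thesis unfolding Efun_def np_def by (rule mult_left_mono) simp
qed


lemma GG_anti:
  assumes n2: "n \<ge> 2" and t: "0 < \<tau>1" "\<tau>1 \<le> \<tau>2"
  shows "GG n A \<tau>2 \<le> GG n A \<tau>1"
  unfolding GG_def
proof (intro nn_integral_mono)
  fix \<sigma> :: real
  have "max \<tau>2 (2 * aa A \<sigma>) powr (- (1 / (real n - 1))) \<le> max \<tau>1 (2 * aa A \<sigma>) powr (- (1 / (real n - 1)))"
    using n2 t by (intro powr_mono2') auto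
  then show "indicator {0<..1} \<sigma> * ennreal (max \<tau>2 (2 * aa A \<sigma>) powr - (1 / (real n - 1)))
    \<le> indicator {0<..1} \<sigma> * ennreal (max \<tau>1 (2 * aa A \<sigma>) powr - (1 / (real n - 1)))"
    by (intro mult_left_mono ennreal_leI) auto
qed

lemma GG_lower:
  assumes n2: "n \<ge> 2" and yf: "young_finite A" and c2: "C2 A" and t: "0 < \<tau>"
  shows "ennreal ((max \<tau> (2 * aa A 1)) powr (- (1 / (real n - 1)))) \<le> GG n A \<tau>"
proof -
  have "ennreal ((max \<tau> (2 * aa A 1)) powr (- (1 / (real n - 1)))) =
      (\<integral>\<^sup>+ (\<sigma>::real). ennreal ((max \<tau> (2 * aa A 1)) powr (- (1 / (real n - 1)))) * indicator {0<..1} \<sigma> \<partial>lborel)"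
  proof -
    have m: "{0<..1::real} \<in> sets lborel" by measurable
    have "(\<integral>\<^sup>+ (\<sigma>::real). ennreal ((max \<tau> (2 * aa A 1)) powr (- (1 / (real n - 1)))) * indicator {0<..1} \<sigma> \<partial>lborel)
      = ennreal ((max \<tau> (2 * aa A 1)) powr (- (1 / (real n - 1)))) * emeasure lborel {0<..1::real}"
      by (rule nn_integral_cmult_indicator[OF m])
    then show ?thesis by simp
  qed
  also have "\<dots> \<le> GG n A \<tau>" unfolding GG_def
  proof (intro nn_integral_mono)
    fix \<sigma> :: real
    show "ennreal ((max \<tau> (2 * aa A 1)) powr (- (1 / (real n - 1)))) * indicator {0<..1} \<sigma>
        \<le> indicator {0<..1} \<sigma> * ennreal (max \<tau> (2 * aa A \<sigma>) powr - (1 / (real n - 1)))"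
    proof (cases "\<sigma> \<in> {0<..1}")
      case True
      then have "aa A \<sigma> \<le> aa A 1" using aa_mono[OF yf c2] by (auto dest: monoD)
      then have "max \<tau> (2 * aa A 1) powr (- (1 / (real n - 1))) \<le> max \<tau> (2 * aa A \<sigma>) powr (- (1 / (real n - 1)))"
        using n2 t by (intro powr_mono2') auto
      then show ?thesis using True by (simp add: ennreal_leI)
    qed simp
  qed
  finally show ?thesis .
qed

lemma GG_large:
  assumes n2: "n \<ge> 2" and yf: "young_finite A" and c2: "C2 A" and c3: "C3 n A"
  shows "\<exists>\<delta>>0. ennreal M < GG n A \<delta>"
proof -
  define p where "p = 1 / (real n - 1)"
  have p0: "0 < p" using n2 by (simp add: p_def)
  have [measurable]: "aa A \<in> borel_measurable borel" using yf c2 by (rule aa_meas)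
  define f where "f k \<sigma> = indicator {0<..1} \<sigma> * ennreal ((max (1 / real (Suc k)) (2 * aa A \<sigma>)) powr (- p))" for k \<sigma>
  have inc: "incseq f"
  proof (rule incseq_SucI, rule le_funI)
    fix k \<sigma>
    have "1 / real (Suc (Suc k)) \<le> 1 / real (Suc k)" by (simp add: frac_le)
    moreover have "0 < max (1 / real (Suc (Suc k))) (2 * aa A \<sigma>)" by (simp add: less_max_iff_disj)
    ultimately have "max (1 / real (Suc k)) (2 * aa A \<sigma>) powr (- p) \<le> max (1 / real (Suc (Suc k))) (2 * aa A \<sigma>) powr (- p)"
      using p0 by (intro powr_mono2') auto
    then show "f k \<sigma> \<le> f (Suc k) \<sigma>" unfolding f_def by (intro mult_left_mono ennreal_leI) auto
  qed
  have fm: "f k \<in> borel_measurable lborel" for k unfolding f_def by measurable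
  have GGf: "GG n A (1 / real (Suc k)) = integral\<^sup>N lborel (f k)" for k
    unfolding GG_def f_def p_def ..
  have c3i: "(\<integral>\<^sup>+ t. ennreal ((t / A t) powr p) * indicator {0<..1} t \<partial>lborel) = \<infinity>"
    using c3 n2 unfolding C3_def p_def by auto
  have "(\<integral>\<^sup>+ t. ennreal ((t / A t) powr p) * indicator {0<..1} t \<partial>lborel)
      \<le> (\<integral>\<^sup>+ t. ennreal (2 powr p) * (indicator {0<..1} t * ennreal ((2 * aa A t) powr (- p))) \<partial>lborel)"
  proof (intro nn_integral_mono)
    fix t :: real
    show "ennreal ((t / A t) powr p) * indicator {0<..1} t \<le> ennreal (2 powr p) * (indicator {0<..1} t * ennreal ((2 * aa A t) powr (- p)))"
    proof (cases "t \<in> {0<..1}")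
      case True
      then have ap: "0 < aa A t" using aa_pos[OF c2] by auto
      have "(t / A t) powr p = (aa A t) powr (- p)" using True ap by (simp add: aa_def powr_minus inverse_powr[symmetric])
      also have "\<dots> = 2 powr p * (2 * aa A t) powr (- p)" using ap by (simp add: powr_mult powr_minus field_simps)
      finally show ?thesis using True by (simp add: ennreal_mult)
    qed simp
  qed
  also have "\<dots> = ennreal (2 powr p) * (\<integral>\<^sup>+ t. indicator {0<..1} t * ennreal ((2 * aa A t) powr (- p)) \<partial>lborel)"
    by (rule nn_integral_cmult) measurable
  finally have inf1: "\<infinity> \<le> ennreal (2 powr p) * (\<integral>\<^sup>+ t. indicator {0<..1} t * ennreal ((2 * aa A t) powr (- p)) \<partial>lborel)"
    using c3i by simp
  have X: "(\<integral>\<^sup>+ t. indicator {0<..1} t * ennreal ((2 * aa A t) powr (- p)) \<partial>lborel) = \<infinity>"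
  proof (rule ccontr)
    assume "\<not> ?thesis"
    then have "ennreal (2 powr p) * (\<integral>\<^sup>+ t. indicator {0<..1} t * ennreal ((2 * aa A t) powr (- p)) \<partial>lborel) < \<infinity>"
      by (simp add: ennreal_mult_less_top less_top)
    then show False using inf1 by simp
  qed
  have "(\<integral>\<^sup>+ t. indicator {0<..1} t * ennreal ((2 * aa A t) powr (- p)) \<partial>lborel) \<le> (\<integral>\<^sup>+ t. (SUP k. f k t) \<partial>lborel)"
  proof (intro nn_integral_mono)
    fix t :: real
    show "indicator {0<..1} t * ennreal ((2 * aa A t) powr (- p)) \<le> (SUP k. f k t)"
    proof (cases "t \<in> {0<..1}")
      case True
      then have ap: "0 < 2 * aa A t" using aa_pos[OF c2] by auto
      obtain k0 where k0: "0 < k0" "inverse (real k0) < 2 * aa A t" using ex_inverse_of_nat_less[OF ap] by auto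
      then obtain k where kk: "k0 = Suc k" by (cases k0) auto
      have k: "inverse (real (Suc k)) < 2 * aa A t" using k0 kk by simp
      have "f k t = indicator {0<..1} t * ennreal ((2 * aa A t) powr (- p))"
        using k unfolding f_def by (simp add: inverse_eq_divide max_def)
      then show ?thesis by (metis SUP_upper UNIV_I)
    qed (simp add: f_def)
  qed
  also have "\<dots> = (SUP k. integral\<^sup>N lborel (f k))" by (rule nn_integral_monotone_convergence_SUP[OF inc fm])
  finally have "(SUP k. integral\<^sup>N lborel (f k)) = \<infinity>" using X by (simp add: top_unique)
  then have SUPinf: "(SUP k. GG n A (1 / real (Suc k))) = \<infinity>" unfolding GGf .
  have "ennreal M < (SUP k. GG n A (1 / real (Suc k)))" unfolding SUPinf by simp
  then obtain k where "ennreal M < GG n A (1 / real (Suc k))" by (auto simp: less_SUP_iff)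
  then show ?thesis by (intro exI[of _ "1 / real (Suc k)"]) auto
qed



lemma term_le:
  assumes "ennreal x \<le> E" "0 \<le> x"
  shows "ereal y - enn2ereal E \<le> ereal (y - x)"
proof -
  have "ereal x \<le> enn2ereal E" using assms by (metis enn2ereal_ennreal less_eq_ennreal.rep_eq)
  then show ?thesis by (cases "enn2ereal E") auto
qed

lemma term_ge:
  assumes "E \<le> ennreal x" "0 \<le> x"
  shows "ereal (y - x) \<le> ereal y - enn2ereal E"
proof -
  have "enn2ereal E \<le> ereal x" using assms by (metis enn2ereal_ennreal less_eq_ennreal.rep_eq)
  moreover have "0 \<le> enn2ereal E" by simp
  ultimately show ?thesis by (cases "enn2ereal E") auto
qed

lemma ennreal_chain:
  assumes "ennreal g \<le> G" "0 \<le> a" "0 \<le> b" "0 \<le> g"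
  shows "ennreal (a * (1/2 * (b * g))) \<le> ennreal a * (ennreal (1/2) * (ennreal b * G))"
proof -
  have e1: "ennreal (a * (1/2 * (b * g))) = ennreal a * ennreal (1/2 * (b * g))" by (rule ennreal_mult) (use assms in auto)
  have e2: "ennreal (1/2 * (b * g)) = ennreal (1/2) * ennreal (b * g)" by (rule ennreal_mult) (use assms in auto)
  have e3: "ennreal (b * g) = ennreal b * ennreal g" by (rule ennreal_mult) (use assms in auto)
  have "ennreal (a * (1/2 * (b * g))) = ennreal a * (ennreal (1/2) * (ennreal b * ennreal g))"
    by (simp only: e1 e2 e3)
  also have "\<dots> \<le> ennreal a * (ennreal (1/2) * (ennreal b * G))"
    using assms(1) by (intro mult_left_mono) auto
  finally show ?thesis .
qed

lemma Bfun_n: "n \<noteq> 1 \<Longrightarrow> Bfun n A t = (SUP \<tau>\<in>{0..}. ereal (\<tau> * t) - enn2ereal (Efun n A \<tau>))"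
  by (simp add: Bfun_def)

lemma B_n2_0: "n \<ge> 2 \<Longrightarrow> Bfun n A 0 \<le> 0"
  by (subst Bfun_n) (auto intro!: SUP_least simp: zero_ereal_def[symmetric])

lemma B_n2_4:
  assumes n2: "n \<ge> 2" and r: "1 \<le> r" and t: "0 \<le> \<tau>" and B: "Bfun n A \<tau> \<le> ereal (r * u)"
  shows "Bfun n A (\<tau> / r) \<le> ereal u"
proof -
  have eq: "Bfun n A x = (SUP \<tau>\<in>{0..}. ereal (\<tau> * x) - enn2ereal (Efun n A \<tau>))" for x using n2 by (simp add: Bfun_n)
  show ?thesis unfolding eq
  proof (intro SUP_least)
  fix \<sigma> :: real assume s: "\<sigma> \<in> {0..}"
  have "ereal (\<sigma> * \<tau>) - enn2ereal (Efun n A \<sigma>) \<le> Bfun n A \<tau>"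
    unfolding eq using s by (intro SUP_upper) auto
  then have h: "ereal (\<sigma> * \<tau>) - enn2ereal (Efun n A \<sigma>) \<le> ereal (r * u)" using B by (rule order_trans)
  show "ereal (\<sigma> * (\<tau> / r)) - enn2ereal (Efun n A \<sigma>) \<le> ereal u"
  proof (cases "enn2ereal (Efun n A \<sigma>)")
    case (real e)
    have e0: "0 \<le> e" using enn2ereal_nonneg[of "Efun n A \<sigma>"] real by simp
    have "\<sigma> * \<tau> - e \<le> r * u" using h real by simp
    then have "(\<sigma> * \<tau> - e) / r \<le> u" using r by (simp add: divide_le_eq mult.commute)
    moreover have "\<sigma> * (\<tau> / r) - e \<le> (\<sigma> * \<tau> - e) / r"
    proof -
      have "e / r \<le> e" using e0 r by (simp add: divide_le_eq mult_le_cancel_left1 mult.commute)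
      then show ?thesis using r by (simp add: diff_divide_distrib)
    qed
    ultimately show ?thesis using real by simp
  qed auto
  qed
qed


lemma B_n2_2:
  assumes n2: "n \<ge> 2" and yf: "young_finite A" and c1: "C1 n A" and c2: "C2 A"
  shows "\<exists>c>0. \<exists>T0. \<forall>t\<ge>T0. ereal (c * t ^ n) \<le> Bfun n A t"
proof -
  have eq: "Bfun n A x = (SUP \<tau>\<in>{0..}. ereal (\<tau> * x) - enn2ereal (Efun n A \<tau>))" for x using n2 by (simp add: Bfun_n)
  define e1 where "e1 = enn2real (Efun n A 1)"
  have fin: "Efun n A 1 < \<infinity>" by (rule E1_finite[OF n2 yf c1 c2])
  have E1: "Efun n A 1 = ennreal e1" unfolding e1_def using fin by (simp add: ennreal_enn2real less_top)
  have e10: "0 \<le> e1" unfolding e1_def by simp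
  define q where "q = 2 * (e1 + 1)"
  have q1: "1 \<le> q" using e10 by (simp add: q_def)
  define c where "c = 1 / (2 * q ^ (n - 1))"
  have c0: "0 < c" using q1 by (simp add: c_def)
  have main: "ereal (c * t ^ n) \<le> Bfun n A t" if tq: "q \<le> t" for t
  proof -
    have t0: "0 < t" using q1 tq by auto
    define \<tau> where "\<tau> = (t / q) ^ (n - 1)"
    have tq1: "1 \<le> t / q" using tq q1 by simp
    have t1: "1 \<le> \<tau>" unfolding \<tau>_def using tq1 by (rule one_le_power)
    have tnp: "\<tau> powr nprime n = (t / q) ^ n"
    proof -
      have "\<tau> powr nprime n = ((t / q) powr real (n - 1)) powr nprime n"
        unfolding \<tau>_def using tq1 by (simp add: powr_realpow)
      also have "\<dots> = (t / q) powr (real (n - 1) * nprime n)" by (simp add: powr_powr)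
      also have "real (n - 1) * nprime n = real n" using n2 by (simp add: nprime_def of_nat_diff)
      also have "(t / q) powr real n = (t / q) ^ n" using tq1 by (simp add: powr_realpow)
      finally show ?thesis .
    qed
    have "Efun n A \<tau> \<le> ennreal (\<tau> powr nprime n) * Efun n A 1" by (rule Efun_le_1[OF t1])
    also have "\<dots> = ennreal ((t / q) ^ n * e1)" using e10 tq1 by (simp add: E1 tnp ennreal_mult)
    finally have Eb: "Efun n A \<tau> \<le> ennreal ((t / q) ^ n * e1)" .
    have "ereal (\<tau> * t - (t / q) ^ n * e1) \<le> ereal (\<tau> * t) - enn2ereal (Efun n A \<tau>)"
      using Eb e10 tq1 by (intro term_ge) auto
    also have "\<dots> \<le> Bfun n A t" unfolding eq using t1 by (intro SUP_upper) auto
    finally have h: "ereal (\<tau> * t - (t / q) ^ n * e1) \<le> Bfun n A t" .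
    define w where "w = t ^ n / q ^ (n - 1)"
    have w0: "0 \<le> w" using t0 q1 by (simp add: w_def)
    have tt: "\<tau> * t = w"
    proof -
      have "\<tau> * t = t ^ (n - 1) * t / q ^ (n - 1)" unfolding \<tau>_def by (simp add: power_divide)
      also have "t ^ (n - 1) * t = t ^ n" using n2 by (metis Suc_diff_le le_trans one_le_numeral diff_Suc_1 power_Suc2)
      finally show ?thesis by (simp add: w_def)
    qed
    have tqn: "(t / q) ^ n = w / q"
    proof -
      have "(t / q) ^ n = t ^ n / q ^ n" by (simp add: power_divide)
      also have "q ^ n = q ^ (n - 1) * q" using n2 by (metis Suc_diff_le le_trans one_le_numeral diff_Suc_1 power_Suc2)
      finally show ?thesis by (simp add: w_def)
    qed
    have "c * t ^ n = w / 2" by (simp add: c_def w_def)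
    also have "w / 2 \<le> w - w / q * e1"
    proof -
      have "e1 / q \<le> 1 / 2" using e10 by (simp add: q_def field_simps)
      then have "w * (e1 / q) \<le> w * (1/2)" using w0 by (rule mult_left_mono)
      then show ?thesis by (simp add: field_simps)
    qed
    finally have "c * t ^ n \<le> \<tau> * t - (t / q) ^ n * e1" by (simp add: tt tqn)
    then show "ereal (c * t ^ n) \<le> Bfun n A t" using h by (meson ereal_less_eq(3) order_trans)
  qed
  show ?thesis using main c0 by blast
qed


lemma young_aux:
  assumes n2: "n \<ge> 2" and K: "0 < K" and t: "0 \<le> \<tau>" "0 \<le> t"
  shows "\<tau> * t \<le> ((K / real n) powr (1 / real n)) powr nprime n / nprime n * \<tau> powr nprime n + t ^ n / K"
proof -
  define \<alpha> where "\<alpha> = (K / real n) powr (1 / real n)"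
  have a0: "0 < \<alpha>" using K n2 by (simp add: \<alpha>_def)
  have np1: "nprime n > 1" using n2 by (simp add: nprime_def field_simps)
  have n1: "real n > 1" using n2 by simp
  have conj: "1 / nprime n + 1 / real n = 1" using n2 by (simp add: nprime_def field_simps)
  have Y: "(\<alpha> * \<tau>) * (t / \<alpha>) \<le> (\<alpha> * \<tau>) powr nprime n / nprime n + (t / \<alpha>) powr real n / real n"
    using a0 t by (intro Youngs_inequality[OF np1 n1 conj]) auto
  have l: "(\<alpha> * \<tau>) * (t / \<alpha>) = \<tau> * t" using a0 by simp
  have m: "(\<alpha> * \<tau>) powr nprime n = \<alpha> powr nprime n * \<tau> powr nprime n" using a0 t by (simp add: powr_mult)
  have an: "\<alpha> powr real n = K / real n" using K n2 by (simp add: \<alpha>_def powr_powr)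
  have tn: "t powr real n = t ^ n"
  proof (cases "t = 0")
    case True then show ?thesis using n2 by simp
  next
    case False then show ?thesis using t by (simp add: powr_realpow)
  qed
  have r: "(t / \<alpha>) powr real n / real n = t ^ n / K"
    using a0 t n2 K by (simp add: powr_divide an tn field_simps)
  show ?thesis using Y unfolding l m r \<alpha>_def[symmetric] by (simp add: field_simps)
qed

lemma B_n2_3:
  assumes n2: "n \<ge> 2" and yf: "young_finite A" and c2: "C2 A" and c3: "C3 n A" and K: "0 < K"
  shows "\<exists>\<delta>>0. \<forall>t. 0 \<le> t \<and> t \<le> \<delta> \<longrightarrow> Bfun n A t \<le> ereal (t ^ n / K)"
proof -
  have eq: "Bfun n A x = (SUP \<tau>\<in>{0..}. ereal (\<tau> * x) - enn2ereal (Efun n A \<tau>))" for x using n2 by (simp add: Bfun_n)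
  define p where "p = 1 / (real n - 1)"
  define np where "np = nprime n"
  have p0: "0 < p" using n2 by (simp add: p_def)
  have npp: "np = 1 + p" using np_eq[OF n2] by (simp add: np_def p_def)
  define M where "M = ((K / real n) powr (1 / real n)) powr np / np"
  have M0: "0 \<le> M" using npp p0 by (simp add: M_def)
  have Y: "\<tau> * t \<le> M * \<tau> powr np + t ^ n / K" if "0 \<le> \<tau>" "0 \<le> t" for \<tau> t
    using young_aux[OF n2 K that] by (simp add: M_def np_def)
  define M' where "M' = 2 * M / (real n - 1)"
  obtain \<delta> where d: "\<delta> > 0" "ennreal M' < GG n A \<delta>" using GG_large[OF n2 yf c2 c3] by blast
  have E_small: "ennreal (M * \<tau> powr np) \<le> Efun n A \<tau>" if "0 \<le> \<tau>" "\<tau> \<le> \<delta>" for \<tau>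
  proof (cases "\<tau> = 0")
    case True then show ?thesis by simp
  next
    case False
    then have t0: "0 < \<tau>" using that by auto
    have "ennreal M' \<le> GG n A \<tau>" using d(2) GG_anti[OF n2 t0 that(2)] by (meson less_imp_le order_trans)
    then have "ennreal (\<tau> powr np * (1/2 * ((real n - 1) * M'))) \<le> ennreal (\<tau> powr np) * (ennreal (1/2) * (ennreal (real n - 1) * GG n A \<tau>))"
      using n2 M0 by (intro ennreal_chain) (auto simp: M'_def)
    also have "\<dots> \<le> Efun n A \<tau>" unfolding np_def by (rule E_lower[OF n2 yf c2 t0])
    finally have h: "ennreal (\<tau> powr np * (1/2 * ((real n - 1) * M'))) \<le> Efun n A \<tau>" .
    have "(real n - 1) * M' = 2 * M" using n2 by (simp add: M'_def)
    then have "\<tau> powr np * (1/2 * ((real n - 1) * M')) = M * \<tau> powr np" by simp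
    then show ?thesis using h by metis
  qed
  define D where "D = 2 * aa A 1"
  have D0: "0 < D" using aa_pos[OF c2, of 1] by (simp add: D_def)
  define \<mu> where "\<mu> = min 1 (\<delta> / D)"
  have mu0: "0 < \<mu>" using d D0 by (simp add: \<mu>_def)
  define \<kappa> where "\<kappa> = 1/2 * (real n - 1) * \<mu> powr p"
  have k0: "0 < \<kappa>" using n2 mu0 by (simp add: \<kappa>_def)
  have E_big: "ennreal (\<kappa> * \<tau>) \<le> Efun n A \<tau>" if "\<delta> \<le> \<tau>" for \<tau>
  proof -
    have t0: "0 < \<tau>" using that d by auto
    define m where "m = max \<tau> D"
    have m0: "0 < m" using D0 by (simp add: m_def less_max_iff_disj)
    have "ennreal (m powr (- p)) \<le> GG n A \<tau>" using GG_lower[OF n2 yf c2 t0] by (simp add: m_def D_def p_def)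
    then have "ennreal (\<tau> powr np * (1/2 * ((real n - 1) * m powr (- p)))) \<le> ennreal (\<tau> powr np) * (ennreal (1/2) * (ennreal (real n - 1) * GG n A \<tau>))"
      using n2 by (intro ennreal_chain) auto
    also have "\<dots> \<le> Efun n A \<tau>" unfolding np_def by (rule E_lower[OF n2 yf c2 t0])
    finally have h: "ennreal (\<tau> powr np * (1/2 * ((real n - 1) * m powr (- p)))) \<le> Efun n A \<tau>" .
    have "\<mu> \<le> \<tau> / m"
    proof (cases "D \<le> \<tau>")
      case True then show ?thesis using t0 by (simp add: m_def \<mu>_def)
    next
      case False
      then have "\<delta> / D \<le> \<tau> / m" using that D0 by (simp add: m_def divide_right_mono)
      then show ?thesis by (simp add: \<mu>_def)
    qed
    then have "\<mu> powr p \<le> (\<tau> / m) powr p" using mu0 p0 by (intro powr_mono2) auto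
    also have "(\<tau> / m) powr p = \<tau> powr p * m powr (- p)" 
    proof -
      have "(\<tau> / m) powr p = \<tau> powr p / m powr p" using t0 m0 by (simp add: powr_divide)
      also have "\<dots> = \<tau> powr p * m powr (- p)" by (simp only: powr_minus divide_inverse)
      finally show ?thesis .
    qed
    finally have "\<tau> * \<mu> powr p \<le> \<tau> * (\<tau> powr p * m powr (- p))" using t0 by (simp add: mult_left_mono)
    also have "\<tau> * (\<tau> powr p * m powr (- p)) = \<tau> powr np * m powr (- p)" using t0 npp by (simp add: powr_add)
    finally have X: "\<tau> * \<mu> powr p \<le> \<tau> powr np * m powr (- p)" .
    have "1/2 * (real n - 1) * (\<tau> * \<mu> powr p) \<le> 1/2 * (real n - 1) * (\<tau> powr np * m powr (- p))"
      by (rule mult_left_mono[OF X]) (use n2 in simp)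
    then have "\<kappa> * \<tau> \<le> \<tau> powr np * (1/2 * ((real n - 1) * m powr (- p)))"
      unfolding \<kappa>_def by (simp add: mult_ac)
    then have "ennreal (\<kappa> * \<tau>) \<le> ennreal (\<tau> powr np * (1/2 * ((real n - 1) * m powr (- p))))" by (rule ennreal_leI)
    then show ?thesis using h by (rule order_trans)
  qed
  show ?thesis
  proof (intro exI[of _ \<kappa>] conjI allI impI k0)
    fix t assume t: "0 \<le> t \<and> t \<le> \<kappa>"
    show "Bfun n A t \<le> ereal (t ^ n / K)" unfolding eq
    proof (rule SUP_least)
      fix \<tau> :: real assume "\<tau> \<in> {0..}"
      then have t0: "0 \<le> \<tau>" by auto
      show "ereal (\<tau> * t) - enn2ereal (Efun n A \<tau>) \<le> ereal (t ^ n / K)"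
      proof (cases "\<tau> \<le> \<delta>")
        case True
        have "ereal (\<tau> * t) - enn2ereal (Efun n A \<tau>) \<le> ereal (\<tau> * t - M * \<tau> powr np)"
          using E_small[OF t0 True] M0 by (intro term_le) auto
        also have "\<dots> \<le> ereal (t ^ n / K)" using Y[OF t0, of t] t by simp
        finally show ?thesis .
      next
        case False
        have a: "ereal (\<tau> * t) - enn2ereal (Efun n A \<tau>) \<le> ereal (\<tau> * t - \<kappa> * \<tau>)"
          using E_big[of \<tau>] False k0 t0 by (intro term_le) auto
        have "\<tau> * t \<le> \<tau> * \<kappa>" using t t0 by (intro mult_left_mono) auto
        then have "\<tau> * t - \<kappa> * \<tau> \<le> 0" by (simp add: mult.commute)
        moreover have "0 \<le> t ^ n / K" using t K by simp
        ultimately have b: "ereal (\<tau> * t - \<kappa> * \<tau>) \<le> ereal (t ^ n / K)" by simp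
        show ?thesis using a b by (rule order_trans)
      qed
    qed
  qed
qed



theorem lemma4p8:
  fixes n :: nat and A \<phi> :: "real \<Rightarrow> real"
  assumes "n \<ge> 1"
    and "young_finite A" and "C1 n A" and "C2 A" and "C3 n A"
    and "gauge n \<phi>"
    and "filterlim (\<lambda>r. \<phi> r / r ^ n) at_top (at_right 0)"
  shows "\<forall>r>0.
     Liminf (at_right 0) (\<lambda>t. ereal (\<phi> (Jrinv n A \<phi> r t) / psi n A \<phi> t))
       \<ge> 1 / right_lim (Theta0 (psi n A \<phi>)) (real_of_ereal (ThetaInf (Binv n A) r))
   \<and> (INF t\<in>{0<..}. ereal (\<phi> (Jrinv n A \<phi> r t) / psi n A \<phi> t))
       \<ge> 1 / right_lim (Theta (psi n A \<phi>)) (real_of_ereal (Theta (Binv n A) r))"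
proof -
  note n1 = assms(1) and yf = assms(2) and c1 = assms(3) and c2 = assms(4) and c3 = assms(5)
    and gphi = assms(6) and lim = assms(7)
  have B0: "Bfun n A 0 \<le> 0"
  proof (cases "n = 1")
    case True then show ?thesis using B_n1[OF yf _ c2] c1 c3 by auto
  next
    case False then show ?thesis using n1 B_n2_0[of n A] by auto
  qed
  have B2: "\<exists>c>0. \<exists>T0. \<forall>t\<ge>T0. ereal (c * t ^ n) \<le> Bfun n A t"
  proof (cases "n = 1")
    case True then show ?thesis using B_n1(2)[OF yf _ c2] c1 c3 by auto
  next
    case False then have "n \<ge> 2" using n1 by auto
    then show ?thesis using B_n2_2[OF _ yf c1 c2] by auto
  qed
  have B3: "\<exists>\<delta>>0. \<forall>t. 0 \<le> t \<and> t \<le> \<delta> \<longrightarrow> Bfun n A t \<le> ereal (t ^ n / K)" if K: "K > 0" for K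
  proof (cases "n = 1")
    case True then show ?thesis using B_n1(3)[OF yf _ c2 _ K] c1 c3 by auto
  next
    case False then have "n \<ge> 2" using n1 by auto
    then show ?thesis using B_n2_3[OF _ yf c2 c3 K] by auto
  qed
  have B4: "Bfun n A (\<tau> / r) \<le> ereal u" if "1 \<le> r" "0 \<le> \<tau>" "Bfun n A \<tau> \<le> ereal (r * u)" for r \<tau> u
  proof (cases "n = 1")
    case True
    have h: "C1 1 A" "C3 1 A" "Bfun 1 A \<tau> \<le> ereal (r * u)" using c1 c3 that(3) True by auto
    show ?thesis using B_n1(4)[OF yf h(1) c2 h(2) that(1,2) h(3)] True by simp
  next
    case False then have "n \<ge> 2" using n1 by auto
    then show ?thesis using B_n2_4[OF _ that] by auto
  qed
  show ?thesis
  proof (intro allI impI conjI)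
    fix r :: real assume r: "r > 0"
    show "Liminf (at_right 0) (\<lambda>t. ereal (\<phi> (Jrinv n A \<phi> r t) / psi n A \<phi> t))
       \<ge> 1 / right_lim (Theta0 (psi n A \<phi>)) (real_of_ereal (ThetaInf (Binv n A) r))"
      by (rule main_theta0[OF n1 B0 B2 B3 B4 gphi r lim])
    show "(INF t\<in>{0<..}. ereal (\<phi> (Jrinv n A \<phi> r t) / psi n A \<phi> t))
       \<ge> 1 / right_lim (Theta (psi n A \<phi>)) (real_of_ereal (Theta (Binv n A) r))"
      by (rule main_theta[OF n1 B0 B2 B3 B4 gphi r])
  qed
qed

end
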